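(* Let $m\ge1$, $P_m(z)=\sum_{j=0}^m \frac{(2m-j)!}{j!(m-j)!}z^j$ and $R_m(z)=P_m(z)/P_m(-z)$. The solutions $\hat z_j(t,0)$, $j=1,\dots,m$, of $R_m(z)=e^t$, $t\in\mathbb{C}$, can be labelled so that as $|t|\to 0$ $$\hat z_1(t,0)=t+\mathcal{O}(t^{2m+1}),\qquad \hat z_{2\ell}(t,0)=\mathrm{i}r_\ell+\delta_\ell t+\mathcal{O}(t^2),\qquad \hat z_{2\ell+1}(t,0)=-\mathrm{i}r_\ell+\delta_\ell t+\mathcal{O}(t^2)$$ for $\ell=1,\dots,\lceil m/2\rceil-1$, with $r_\ell\in\mathbb{R}$ and $\delta_\ell>1$. If $m$ is even, these give $m-1$ of the solutions, and the remaining one satisfies $$\hat z_m(t,0)=\frac{D_m}{t}+\mathcal{O}(1)\qquad\text{as }|t|\to0,$$ for some constant $D_m>0$.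
   Context: $R_m$ is the stability function of the $m$-stage Gauss Runge–Kutta method (the $(m,m)$-Padé approximant of $e^z$). The numbers $\pm\mathrm{i}r_\ell$ are the nonzero zeros of $P_m(z)-P_m(-z)$. *)

theory Defs
  imports Complex_Main "HOL-Library.Landau_Symbols"
begin

text \<open>Numerator of the (m,m)-Pade approximant of exp.\<close>
definition Pm :: "nat \<Rightarrow> complex \<Rightarrow> complex" where
  "Pm m z = (\<Sum>j=0..m. (fact (2*m - j) / (fact j * fact (m - j))) * z ^ j)"

text \<open>Stability function of the m-stage Gauss method.\<close>
definition Rm :: "nat \<Rightarrow> complex \<Rightarrow> complex" where
  "Rm m z = Pm m z / Pm m (-z)"

definition gauss_sols :: "nat \<Rightarrow> complex \<Rightarrow> complex set" where
  "gauss_sols m t = {z. Pm m (-z) \<noteq> 0 \<and> Rm m z = exp t}"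

end

theory Submission
  imports Defs "HOL-Complex_Analysis.Complex_Analysis" "HOL-Computational_Algebra.Polynomial"
begin


definition cf :: "nat \<Rightarrow> nat \<Rightarrow> real" where
  "cf m j = (if j \<le> m then fact (2*m-j) / (fact j * fact (m-j)) else 0)"

definition PP :: "nat \<Rightarrow> complex poly" where
  "PP m = (\<Sum>j\<le>m. monom (of_real (cf m j)) j)"

lemma coeff_PP: "coeff (PP m) j = of_real (cf m j)"
  by (simp add: PP_def coeff_sum coeff_monom cf_def)

lemma poly_PP: "poly (PP m) z = Pm m z"
  by (simp add: PP_def Pm_def poly_sum poly_monom cf_def atLeast0AtMost)

lemma aux_rec0:
  fixes A B C E X Y Z N1 N2 :: real
  assumes "A \<noteq> 0" "B \<noteq> 0" "C \<noteq> 0" "E \<noteq> 0" "Y \<noteq> 0" "Z \<noteq> 0"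
    and "N1 = N2 * E + B * A"
  shows "N1*X/(B*A*Y*(E*C*Z)) = N2 * (X/(B*A*Y*(C*Z))) + X/(Y*(E*C*Z))"
  using assms by (simp add: field_simps)

lemma aux_rec2:
  fixes A E X Z N1 N2 :: real
  assumes "A \<noteq> 0" "E \<noteq> 0" "Z \<noteq> 0" "N1 = N2 * E"
  shows "N1*X/(E*A*Z) = N2*(X/(A*Z))"
  using assms by (simp add: field_simps)

lemma aux_rec1:
  fixes x y X Y Z :: real
  assumes "x \<ge> 0" "y \<ge> 0" "Y > 0" "Z > 0"
  shows "(x+2*y+6)*(x+2*y+5)*X/((x+2)*(x+1)*Y*((y+2)*(y+1)*Z))
     = 2*(2*(x+2+y)+3) * (X/((x+2)*(x+1)*Y*((y+1)*Z))) + X/(Y*((y+2)*(y+1)*Z))"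
  by (rule aux_rec0) (use assms in \<open>auto simp: algebra_simps\<close>)

lemma cf_rec:
  assumes "j \<le> n + 2"
  shows "cf (n+2) j = 2*(2*n+3) * cf (n+1) j + (if j \<ge> 2 then cf n (j-2) else 0)"
proof (cases "j \<le> n")
  case True
  then obtain a where n: "n = j + a" using le_Suc_ex by blast
  show ?thesis
  proof (cases "j \<ge> 2")
    case True
    then obtain i where j: "j = i + 2" using le_Suc_ex by (metis add.commute)
    define X :: real where "X = fact (i+2*a+4)"
    have c1: "cf (n+2) j = (real i+2*real a+6)*(real i+2*real a+5)*X/((real i+2)*(real i+1)*fact i*((real a+2)*(real a+1)*fact a))"
      unfolding cf_def X_def using n j
      by (simp add: fact_Suc numeral_eq_Suc algebra_simps)
    have c2: "cf (n+1) j = X/((real i+2)*(real i+1)*fact i*((real a+1)*fact a))"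
      unfolding cf_def X_def using n j
      by (simp add: fact_Suc numeral_eq_Suc algebra_simps)
    have c3: "cf n (j-2) = X/(fact i*((real a+2)*(real a+1)*fact a))"
      unfolding cf_def X_def using n j
      by (simp add: fact_Suc numeral_eq_Suc algebra_simps)
    show ?thesis unfolding c1 c2 c3 using True n j aux_rec1[of "real i" "real a" "fact i" "fact a" X]
      by simp
  next
    case False
    hence "j = 0 \<or> j = 1" by auto
    then show ?thesis
    proof
      assume j: "j = 0"
      define X :: real where "X = fact (2*a+2)"
      have c1: "cf (n+2) j = (2*real a+4)*(2*real a+3)*X/(((real a+2)*(real a+1)*fact a))"
        unfolding cf_def X_def using n j
        by (simp add: fact_Suc numeral_eq_Suc algebra_simps)
      have c2: "cf (n+1) j = X/((real a+1)*fact a)"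
        unfolding cf_def X_def using n j
        by (simp add: fact_Suc numeral_eq_Suc algebra_simps)
      have "(2*real a+4)*(2*real a+3)*X/(((real a+2)*(real a+1)*fact a)) = 2*(2*real a+3)*(X/((real a+1)*fact a))"
        by (rule aux_rec2) (auto simp: algebra_simps)
      then show ?thesis unfolding c1 c2 using j n by simp
    next
      assume j: "j = 1"
      define X :: real where "X = fact (2*a+3)"
      have c1: "cf (n+2) j = (2*real a+5)*(2*real a+4)*X/(((real a+2)*(real a+1)*fact a))"
        unfolding cf_def X_def using n j
        by (simp add: fact_Suc numeral_eq_Suc algebra_simps)
      have c2: "cf (n+1) j = X/((real a+1)*fact a)"
        unfolding cf_def X_def using n j
        by (simp add: fact_Suc numeral_eq_Suc algebra_simps)
      have "(2*real a+5)*(2*real a+4)*X/(((real a+2)*(real a+1)*fact a)) = 2*(2*(real a+1)+3)*(X/((real a+1)*fact a))"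
        by (rule aux_rec2) (auto simp: algebra_simps)
      then show ?thesis unfolding c1 c2 using j n by simp
    qed
  qed
next
  case False
  hence "j = n+1 \<or> j = n+2" using assms by auto
  then show ?thesis
  proof
    assume j: "j = n+1"
    show ?thesis
    proof (cases n)
      case 0 then show ?thesis using j by (simp add: cf_def fact_numeral)
    next
      case (Suc k)
      have "2 * Suc k - k = k + 2" by simp
      then show ?thesis using j Suc by (simp add: cf_def fact_Suc numeral_eq_Suc field_simps; simp add: algebra_simps)
    qed
  next
    assume j: "j = n+2" then show ?thesis by (simp add: cf_def)
  qed
qed

lemma aux_der0:
  fixes Jr I A Z X N :: real
  assumes "Jr \<noteq> 0" "I \<noteq> 0" "A \<noteq> 0" "Z \<noteq> 0" "N = Jr + 2*A"
  shows "2*(X/(Jr*I*Z)) = N*X/(Jr*I*(A*Z)) - X/(I*(A*Z))"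
  using assms by (simp add: field_simps)

lemma aux_cancel:
  fixes B X D :: real
  assumes "B \<noteq> 0"
  shows "2*B*(X/(B*D)) = 2*(X/D)"
  using assms by (cases "D = 0") (simp_all add: field_simps)

lemma aux_j0:
  fixes A X Z :: real
  assumes "A \<noteq> 0" "Z \<noteq> 0"
  shows "2*(X/Z) = (2*A)*X/(A*Z) - 0"
  using assms by (simp add: field_simps)

lemma cf_der:
  shows "2 * real (j+1) * cf (n+1) (j+1) = cf (n+1) j - (if j \<ge> 1 then cf n (j-1) else 0)"
proof (cases "j \<le> n")
  case True
  then obtain a where n: "n = j + a" using le_Suc_ex by blast
  show ?thesis
  proof (cases "j \<ge> 1")
    case True
    then obtain i where j: "j = i + 1" using le_Suc_ex by (metis add.commute)
    define X :: real where "X = fact (i+2*a+2)"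
    have c0: "cf (n+1) (j+1) = X/((real i+2)*((real i+1)*fact i*fact a))"
      unfolding cf_def X_def using n j
      by (simp add: fact_Suc numeral_eq_Suc algebra_simps)
    have c1: "2 * real (j+1) * cf (n+1) (j+1) = 2*(X/((real i+1)*fact i*fact a))"
    proof -
      have e: "real (j+1) = real i + 2" using j by simp
      show ?thesis unfolding c0 e by (rule aux_cancel) simp
    qed
    have c2: "cf (n+1) j = (real i + 2*real a+3)*X/((real i+1)*fact i*((real a+1)*fact a))"
      unfolding cf_def X_def using n j
      by (simp add: fact_Suc numeral_eq_Suc algebra_simps)
    have c3: "cf n (j-1) = X/(fact i*((real a+1)*fact a))"
      unfolding cf_def X_def using n j
      by (simp add: fact_Suc numeral_eq_Suc algebra_simps)
    have "2*(X/((real i+1)*fact i*fact a)) = (real i + 2*real a+3)*X/((real i+1)*fact i*((real a+1)*fact a)) - X/(fact i*((real a+1)*fact a))"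
      by (rule aux_der0) auto
    then show ?thesis unfolding c1 c2 c3 using True by simp
  next
    case False
    hence j: "j = 0" by auto
    define X :: real where "X = fact (2*a+1)"
    have c1: "2 * real (j+1) * cf (n+1) (j+1) = 2*(X/(fact a))"
      unfolding cf_def X_def using n j
      by (simp add: fact_Suc numeral_eq_Suc algebra_simps)
    have c2: "cf (n+1) j = (2*(real a+1))*X/(((real a+1)*fact a))"
      unfolding cf_def X_def using n j
      by (simp add: fact_Suc numeral_eq_Suc algebra_simps)
    have "2*(X/(fact a)) = (2*(real a+1))*X/(((real a+1)*fact a)) - 0"
      by (rule aux_j0) auto
    then show ?thesis unfolding c1 c2 using j by simp
  qed
next
  case False
  then show ?thesis by (cases "j = n+1") (auto simp: cf_def)
qed

lemma cf_zero: "j > m \<Longrightarrow> cf m j = 0"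
  by (simp add: cf_def)

lemma PP_rec: "PP (n+2) = smult (of_real (2*(2*real n+3))) (PP (n+1)) + monom 1 2 * PP n"
proof (rule poly_eqI)
  fix j
  show "coeff (PP (n+2)) j = coeff (smult (of_real (2*(2*real n+3))) (PP (n+1)) + monom 1 2 * PP n) j"
  proof (cases "j \<le> n+2")
    case True
    have c: "(of_real (cf (n+2) j) :: complex) = of_real (2*(2*real n+3)) * of_real (cf (n+1) j) + (if j \<ge> 2 then of_real (cf n (j-2)) else 0)"
      using cf_rec[OF True] by simp
    have m2: "coeff (monom 1 2 * PP n) j = (if j \<ge> 2 then of_real (cf n (j-2)) else 0)"
      by (simp add: coeff_monom_mult coeff_PP)
    show ?thesis unfolding coeff_add coeff_smult m2 coeff_PP using c by (simp add: algebra_simps)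
  next
    case False
    then show ?thesis
      by (simp add: coeff_monom_mult coeff_PP cf_zero)
  qed
qed

lemma Pm_rec: "Pm (n+2) z = 2 * (2 * of_nat n + 3) * Pm (n+1) z + z^2 * Pm n z"
proof -
  have "Pm (n+2) z = poly (PP (n+2)) z" by (simp add: poly_PP)
  also have "\<dots> = 2 * (2 * of_nat n + 3) * Pm (n+1) z + z^2 * Pm n z"
    unfolding PP_rec by (simp add: poly_PP poly_monom)
  finally show ?thesis .
qed

definition dP :: "nat \<Rightarrow> complex \<Rightarrow> complex" where
  "dP m z = poly (pderiv (PP m)) z"

lemma PP_der: "smult 2 (pderiv (PP (n+1))) = PP (n+1) - pCons 0 (PP n)"
proof (rule poly_eqI)
  fix j
  have c: "of_real (2 * real (j+1) * cf (n+1) (j+1)) = (of_real (cf (n+1) j - (if j \<ge> 1 then cf n (j-1) else 0)) :: complex)"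
    using cf_der[of j n] by simp
  show "coeff (smult 2 (pderiv (PP (n+1)))) j = coeff (PP (n+1) - pCons 0 (PP n)) j"
    using c by (cases j) (simp_all add: coeff_pderiv coeff_PP algebra_simps)
qed

lemma dP_eq: "2 * dP (n+1) z = Pm (n+1) z - z * Pm n z"
proof -
  have "2 * dP (n+1) z = poly (smult 2 (pderiv (PP (n+1)))) z" by (simp add: dP_def)
  also have "\<dots> = Pm (n+1) z - z * Pm n z" unfolding PP_der by (simp add: poly_PP)
  finally show ?thesis .
qed

lemma Pm_0 [simp]: "Pm 0 z = 1"
  by (simp add: Pm_def)

lemma Pm_1: "Pm 1 z = 2 + z"
  by (simp add: Pm_def)

lemma Pm_Suc0: "Pm (Suc 0) z = 2 + z"
  by (simp add: Pm_def)

lemma K_ident: "Pm (n+1) z * Pm n (-z) - Pm n z * Pm (n+1) (-z) = 2 * (-1)^n * z^(2*n+1)"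
proof (induction n)
  case 0
  then show ?case by (simp add: Pm_Suc0)
next
  case (Suc n)
  have "Pm (Suc n+1) z * Pm (Suc n) (-z) - Pm (Suc n) z * Pm (Suc n+1) (-z)
      = (- (z^2)) * (Pm (n+1) z * Pm n (-z) - Pm n z * Pm (n+1) (-z))"
    using Pm_rec[of n z] Pm_rec[of n "-z"] by (simp add: algebra_simps)
  also have "\<dots> = 2 * (-1)^(Suc n) * z^(2*Suc n+1)"
    unfolding Suc.IH by (simp add: algebra_simps power_add power2_eq_square)
  finally show ?case .
qed

lemma I1_ident:
  assumes "m \<ge> 1"
  shows "dP m z * Pm m (-z) + Pm m z * dP m (-z) - Pm m z * Pm m (-z) = (-1)^(m+1) * z^(2*m)"
proof -
  obtain n where m: "m = n+1" using assms by (metis add.commute le_Suc_ex)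
  have "2 * (dP m z * Pm m (-z) + Pm m z * dP m (-z) - Pm m z * Pm m (-z))
      = (2*dP (n+1) z) * Pm m (-z) + Pm m z * (2*dP (n+1) (-z)) - 2 * Pm m z * Pm m (-z)"
    unfolding m by (simp add: algebra_simps)
  also have "\<dots> = z * (Pm (n+1) z * Pm n (-z) - Pm n z * Pm (n+1) (-z))"
    unfolding dP_eq m by (simp add: algebra_simps)
  also have "\<dots> = 2 * ((-1)^(m+1) * z^(2*m))"
    unfolding K_ident m by (simp add: algebra_simps power_add)
  finally have h: "2 * (dP m z * Pm m (-z) + Pm m z * dP m (-z) - Pm m z * Pm m (-z)) = 2 * ((-1)^(m+1) * z^(2*m))" .
  show ?thesis using h by (subst (asm) mult_cancel_left) simp
qed


definition u :: "nat \<Rightarrow> real \<Rightarrow> complex" where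
  "u n y = Pm n (\<i> * of_real y)"

definition RP :: "nat \<Rightarrow> complex \<Rightarrow> complex" where
  "RP n w = (\<Sum>j\<le>n. of_real (cf n j) * w^(n-j))"

lemma Pm_cnj: "cnj (Pm n z) = Pm n (cnj z)"
  by (simp add: Pm_def)

lemma Pm_sum: "Pm n z = (\<Sum>j\<le>n. of_real (cf n j) * z^j)"
  by (simp add: poly_PP[symmetric] PP_def poly_sum poly_monom)

lemma cf_nn: "cf n n = 1"
  by (simp add: cf_def)

lemma cf_pos: "j \<le> n \<Longrightarrow> cf n j > 0"
  by (simp add: cf_def)

lemma Pm_at0: "Pm n 0 = of_real (cf n 0)"
  by (simp add: poly_PP[symmetric] poly_0_coeff_0 coeff_PP)

lemma Pm_RP: "z \<noteq> 0 \<Longrightarrow> Pm n z = z^n * RP n (1/z)"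
proof -
  assume z: "z \<noteq> 0"
  have "z^n * RP n (1/z) = (\<Sum>j\<le>n. of_real (cf n j) * (z^n * (1/z)^(n-j)))"
    by (simp add: RP_def sum_distrib_left algebra_simps)
  also have "\<dots> = (\<Sum>j\<le>n. of_real (cf n j) * z^j)"
  proof (rule sum.cong)
    fix j assume "j \<in> {..n}"
    then have "z^n * (1/z)^(n-j) = z^j"
      using z by (simp add: power_diff power_one_over field_simps)
    then show "of_real (cf n j) * (z^n * (1/z)^(n-j)) = of_real (cf n j) * z^j" by simp
  qed simp
  finally show ?thesis by (simp add: Pm_sum)
qed

lemma RP_0: "RP n 0 = 1"
proof -
  have "RP n 0 = (\<Sum>j\<le>n. if j = n then 1 else 0)"
    unfolding RP_def by (rule sum.cong) (auto simp: cf_nn)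
  then show ?thesis by simp
qed

lemma cont_RP: "continuous_on A (RP n)"
  unfolding RP_def by (intro continuous_intros)

lemma cont_Pm: "continuous_on A (Pm n)"
  unfolding Pm_def by (intro continuous_intros)

lemma cont_u: "continuous_on A (u n)"
  unfolding u_def Pm_def by (intro continuous_intros)

lemma Im_u: "Im (u (n+1) y * cnj (u n y)) = y^(2*n+1)"
proof -
  let ?w = "u (n+1) y * cnj (u n y)"
  have c: "cnj (\<i> * complex_of_real y) = - (\<i> * complex_of_real y)" by simp
  have "?w - cnj ?w = 2 * (-1)^n * (\<i> * of_real y)^(2*n+1)"
    using K_ident[of n "\<i> * of_real y"] by (simp add: u_def Pm_cnj c) (simp add: algebra_simps)
  also have "(\<i> * complex_of_real y)^(2*n+1) = (-1)^n * \<i> * of_real (y^(2*n+1))"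
  proof -
    have "\<i>^(2*n+1) = (\<i>^2)^n * \<i>" by (simp only: power_add power_mult power_one_right)
    then have "\<i>^(2*n+1) = (-1)^n * \<i>" by simp
    then show ?thesis by (simp add: power_mult_distrib)
  qed
  finally have "?w - cnj ?w = 2 * ((-1)^n * (-1)^n) * \<i> * of_real (y^(2*n+1))"
    by (simp add: algebra_simps)
  also have "(-1::complex)^n * (-1)^n = 1"
    by (simp add: power_add[symmetric])
  finally have "complex_of_real (2 * Im ?w) * \<i> = complex_of_real (2 * y^(2*n+1)) * \<i>"
    unfolding complex_diff_cnj by simp
  then have "complex_of_real (2 * Im ?w) = complex_of_real (2 * y^(2*n+1))"
    by (metis mult_cancel_right complex_i_not_zero)
  then have "2 * Im ?w = 2 * y^(2*n+1)" by (simp only: of_real_eq_iff)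
  then show ?thesis by linarith
qed

lemma u_0: "u n 0 = of_real (cf n 0)"
  by (simp add: u_def Pm_at0)

lemma u_nz: "y \<ge> 0 \<Longrightarrow> u n y \<noteq> 0"
proof (cases n)
  case 0 then show ?thesis by (simp add: u_def)
next
  case (Suc k)
  assume y: "y \<ge> 0"
  show ?thesis
  proof (cases "y = 0")
    case True then show ?thesis using cf_pos[of 0 n] by (simp add: u_0)
  next
    case False
    have "Im (u (k+1) y * cnj (u k y)) = y^(2*k+1)" by (rule Im_u)
    moreover have "y^(2*k+1) > 0" using y False by simp
    ultimately have pos: "Im (u (k+1) y * cnj (u k y)) > 0" by linarith
    show ?thesis
    proof
      assume "u n y = 0"
      then have "u (k+1) y = 0" using Suc by simp
      then have "Im (u (k+1) y * cnj (u k y)) = 0" by simp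
      with pos show False by simp
    qed
  qed
qed

definition is_lift :: "nat \<Rightarrow> (real \<Rightarrow> real) \<Rightarrow> bool" where
  "is_lift n \<phi> \<longleftrightarrow> continuous_on {0..} \<phi> \<and> \<phi> 0 = 0 \<and>
     (\<forall>y\<ge>0. u n y = of_real (cmod (u n y)) * cis (\<phi> y))"

lemma lift_exists: "\<exists>\<phi>. is_lift n \<phi>"
proof -
  have conv: "convex {0::real..}" by (rule convex_real_interval)
  obtain h where h: "continuous_on {0::real..} h" "\<And>y. y \<in> {0..} \<Longrightarrow> u n y = exp (h y)"
    using continuous_logarithm_on_contractible[OF cont_u convex_imp_contractible[OF conv], of n] u_nz
    by auto
  define \<phi> where "\<phi> y = Im (h y) - Im (h 0)" for y
  have cont: "continuous_on {0..} \<phi>"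
    unfolding \<phi>_def by (intro continuous_intros continuous_on_Im h)
  have pol: "u n y = of_real (exp (Re (h y))) * cis (Im (h y))" if "y \<ge> 0" for y
    using h(2)[of y] that by (simp add: exp_eq_polar)
  have nrm: "cmod (u n y) = exp (Re (h y))" if "y \<ge> 0" for y
    using h(2)[of y] that by (simp add: norm_exp_eq_Re)
  have c0: "cis (Im (h 0)) = 1"
  proof -
    have "of_real (cf n 0) = of_real (exp (Re (h 0))) * cis (Im (h 0))"
      using pol[of 0] by (simp add: u_0)
    then have e: "cis (Im (h 0)) = of_real (cf n 0 / exp (Re (h 0)))"
      by (simp add: field_simps)
    have "cmod (cis (Im (h 0))) = 1" by simp
    then have "\<bar>cf n 0 / exp (Re (h 0))\<bar> = 1" unfolding e norm_of_real .
    moreover have "cf n 0 / exp (Re (h 0)) > 0" using cf_pos[of 0 n] by simp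
    ultimately have "cf n 0 / exp (Re (h 0)) = 1" by (metis abs_of_pos)
    then show ?thesis using e cf_pos[of 0 n] by simp
  qed
  have "u n y = of_real (cmod (u n y)) * cis (\<phi> y)" if "y \<ge> 0" for y
  proof -
    have "cis (\<phi> y) = cis (Im (h y)) * cis (- Im (h 0))"
      by (simp add: \<phi>_def cis_mult)
    also have "cis (- Im (h 0)) = 1" using c0 by (metis cis_cnj complex_cnj_one)
    finally show ?thesis using pol[OF that] nrm[OF that] by simp
  qed
  then show ?thesis using cont unfolding is_lift_def by (intro exI[of _ \<phi>]) (simp add: \<phi>_def)
qed

lemma band:
  fixes \<psi> :: "real \<Rightarrow> real"
  assumes "continuous_on {0..} \<psi>" "a < \<psi> 0" "\<psi> 0 < b" "\<forall>y\<ge>0. \<psi> y \<noteq> a \<and> \<psi> y \<noteq> b"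
  shows "\<forall>y\<ge>0. a < \<psi> y \<and> \<psi> y < b"
proof (intro allI impI)
  fix y :: real assume y: "y \<ge> 0"
  have c: "continuous_on {0..y} \<psi>" using assms(1) by (rule continuous_on_subset) auto
  show "a < \<psi> y \<and> \<psi> y < b"
  proof (rule ccontr)
    assume "\<not> (a < \<psi> y \<and> \<psi> y < b)"
    then have "\<psi> y \<le> a \<or> \<psi> y \<ge> b" by auto
    then show False
    proof
      assume "\<psi> y \<le> a"
      then obtain x where "0 \<le> x" "x \<le> y" "\<psi> x = a" using IVT2'[of \<psi> y a 0] c y assms(2) by auto
      then show False using assms(4) by auto
    next
      assume "\<psi> y \<ge> b"
      then obtain x where "0 \<le> x" "x \<le> y" "\<psi> x = b" using IVT'[of \<psi> 0 b y] c y assms(3) by auto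
      then show False using assms(4) by auto
    qed
  qed
qed

lemma phase_limit:
  fixes \<phi> \<phi>0 :: "real \<Rightarrow> real"
  assumes lim0: "(\<phi>0 \<longlongrightarrow> \<beta>) at_top"
    and bnd: "\<forall>y\<ge>0. 0 \<le> \<phi> y - \<phi>0 y \<and> \<phi> y - \<phi>0 y \<le> pi"
    and cosl: "((\<lambda>y. cos (\<phi> y - (\<beta> + pi/2))) \<longlongrightarrow> 1) at_top"
  shows "(\<phi> \<longlongrightarrow> \<beta> + pi/2) at_top"
proof (rule tendstoI)
  fix e :: real assume e: "e > 0"
  define e' where "e' = min e (pi/2)"
  have e': "0 < e'" "e' \<le> e" "e' \<le> pi/2" using e by (auto simp: e'_def)
  have ce: "cos e' < 1" using cos_monotone_0_pi[of 0 e'] e' by simp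
  have ev1: "eventually (\<lambda>y. dist (\<phi>0 y) \<beta> < pi/2) at_top" by (rule tendstoD[OF lim0]) simp
  have ev2: "eventually (\<lambda>y. cos e' < cos (\<phi> y - (\<beta>+pi/2))) at_top"
    using order_tendstoD(1)[OF cosl ce] .
  have ev3: "eventually (\<lambda>y. y \<ge> (0::real)) at_top" by (rule eventually_ge_at_top)
  from ev1 ev2 ev3 show "eventually (\<lambda>y. dist (\<phi> y) (\<beta>+pi/2) < e) at_top"
  proof eventually_elim
    case (elim y)
    define s where "s = \<phi> y - (\<beta> + pi/2)"
    have "\<bar>\<phi>0 y - \<beta>\<bar> < pi/2" using elim(1) by (simp add: dist_real_def)
    then have a1: "-(pi/2) < \<phi>0 y - \<beta>" "\<phi>0 y - \<beta> < pi/2" using abs_less_iff[of "\<phi>0 y - \<beta>" "pi/2"] by linarith+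
    have a2: "0 \<le> \<phi> y - \<phi>0 y" "\<phi> y - \<phi>0 y \<le> pi" using bnd elim(3) by auto
    have "-pi < s" "s < pi" unfolding s_def using a1 a2 by linarith+
    then have sp: "\<bar>s\<bar> < pi" by (simp add: abs_less_iff)
    have "\<bar>s\<bar> < e'"
    proof (rule ccontr)
      assume "\<not> \<bar>s\<bar> < e'"
      then have "cos \<bar>s\<bar> \<le> cos e'" using cos_monotone_0_pi_le[of e' "\<bar>s\<bar>"] e' sp by simp
      then show False using elim(2) unfolding s_def[symmetric] by simp
    qed
    then show ?case using e' by (simp add: s_def dist_real_def)
  qed
qed


lemma inv_i_lim: "((\<lambda>y::real. 1 / (\<i> * complex_of_real y)) \<longlongrightarrow> 0) at_top"
proof -
  have "((\<lambda>y::real. inverse y) \<longlongrightarrow> 0) at_top"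
    by (rule tendsto_inverse_0_at_top) (rule filterlim_ident)
  then have "((\<lambda>y::real. - \<i> * complex_of_real (inverse y)) \<longlongrightarrow> - \<i> * complex_of_real 0) at_top"
    by (intro tendsto_intros)
  moreover have "1 / (\<i> * complex_of_real y) = - \<i> * complex_of_real (inverse y)" for y
    by (cases "y = 0") (simp_all add: field_simps)
  ultimately show ?thesis by simp
qed

lemma v_lim: "((\<lambda>y. RP n (1 / (\<i> * complex_of_real y))) \<longlongrightarrow> 1) at_top"
proof -
  have "isCont (RP n) 0"
    using cont_RP[of UNIV n] by (simp add: continuous_on_eq_continuous_at)
  from isCont_tendsto_compose[OF this inv_i_lim] show ?thesis by (simp add: RP_0)
qed

lemma cis_polar_inv:
  assumes "w = complex_of_real (cmod w) * cis t" "w \<noteq> 0"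
  shows "cis t = w / complex_of_real (cmod w)"
  using assms by (simp add: field_simps)

lemma lift_limit: "is_lift n \<phi> \<Longrightarrow> (\<phi> \<longlongrightarrow> real n * pi / 2) at_top"
proof (induction n arbitrary: \<phi>)
  case 0
  then have cont: "continuous_on {0..} \<phi>" and z: "\<phi> 0 = 0" and pol: "\<forall>y\<ge>0. 1 = cis (\<phi> y)"
    by (auto simp: is_lift_def u_def)
  have "\<forall>y\<ge>0. - pi < \<phi> y \<and> \<phi> y < pi"
  proof (rule band[OF cont])
    show "\<forall>y\<ge>0. \<phi> y \<noteq> - pi \<and> \<phi> y \<noteq> pi"
    proof (intro allI impI conjI notI)
      fix y :: real assume a: "y \<ge> 0" "\<phi> y = - pi"
      then have "cos (\<phi> y) = 1" using pol by (metis cis.sel(1) one_complex.sel(1))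
      then show False using a by simp
    next
      fix y :: real assume a: "y \<ge> 0" "\<phi> y = pi"
      then have "cos (\<phi> y) = 1" using pol by (metis cis.sel(1) one_complex.sel(1))
      then show False using a by simp
    qed
  qed (use z in auto)
  moreover have "\<forall>y\<ge>0. sin (\<phi> y) = 0"
    using pol by (metis cis.sel(2) one_complex.sel(2))
  ultimately have "\<forall>y\<ge>0. \<phi> y = 0" using sin_eq_0_pi by blast
  then have "eventually (\<lambda>y. \<phi> y = 0) at_top"
    using eventually_ge_at_top[of "0::real"] by (metis (mono_tags, lifting) eventually_mono)
  then show ?case by (simp add: tendsto_eventually)
next
  case (Suc n)
  obtain \<phi>0 where L0: "is_lift n \<phi>0" using lift_exists by blast
  have IH: "(\<phi>0 \<longlongrightarrow> real n * pi / 2) at_top" using Suc.IH[OF L0] .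
  have cont: "continuous_on {0..} \<phi>" and z: "\<phi> 0 = 0"
    and pol: "\<And>y. y \<ge> 0 \<Longrightarrow> u (Suc n) y = of_real (cmod (u (Suc n) y)) * cis (\<phi> y)"
    using Suc.prems by (auto simp: is_lift_def)
  have cont0: "continuous_on {0..} \<phi>0" and z0: "\<phi>0 0 = 0"
    and pol0: "\<And>y. y \<ge> 0 \<Longrightarrow> u n y = of_real (cmod (u n y)) * cis (\<phi>0 y)"
    using L0 by (auto simp: is_lift_def)
  define \<psi> where "\<psi> y = \<phi> y - \<phi>0 y" for y
  have prod: "u (Suc n) y * cnj (u n y) = of_real (cmod (u (Suc n) y) * cmod (u n y)) * cis (\<psi> y)"
    if "y \<ge> 0" for y
  proof -
    have "u (Suc n) y * cnj (u n y) = (of_real (cmod (u (Suc n) y)) * cis (\<phi> y)) *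
            cnj (of_real (cmod (u n y)) * cis (\<phi>0 y))"
      using pol[OF that] pol0[OF that] by simp
    also have "\<dots> = of_real (cmod (u (Suc n) y) * cmod (u n y)) * (cis (\<phi> y) * cis (- \<phi>0 y))"
      by (simp add: cis_cnj)
    also have "cis (\<phi> y) * cis (- \<phi>0 y) = cis (\<psi> y)" by (simp add: cis_mult \<psi>_def)
    finally show ?thesis .
  qed
  have sinpos: "sin (\<psi> y) > 0" if "y > 0" for y
  proof -
    have "Im (u (Suc n) y * cnj (u n y)) = y^(2*n+1)" using Im_u[of n y] by simp
    also have "Im (u (Suc n) y * cnj (u n y)) = cmod (u (Suc n) y) * cmod (u n y) * sin (\<psi> y)"
      using prod[of y] that by simp
    finally have e: "cmod (u (Suc n) y) * cmod (u n y) * sin (\<psi> y) = y^(2*n+1)" .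
    have "y^(2*n+1) > 0" using that by simp
    moreover have "cmod (u (Suc n) y) * cmod (u n y) \<ge> 0" by simp
    ultimately show ?thesis using e
      by (metis mult_nonneg_nonpos not_less)
  qed
  have contpsi: "continuous_on {0..} \<psi>"
    unfolding \<psi>_def by (intro continuous_intros cont cont0)
  have psi0: "\<psi> 0 = 0" by (simp add: \<psi>_def z z0)
  have b1: "\<forall>y\<ge>0. - pi < \<psi> y \<and> \<psi> y < pi"
  proof (rule band[OF contpsi])
    show "\<forall>y\<ge>0. \<psi> y \<noteq> - pi \<and> \<psi> y \<noteq> pi"
    proof (intro allI impI)
      fix y :: real assume y: "y \<ge> 0"
      show "\<psi> y \<noteq> - pi \<and> \<psi> y \<noteq> pi"
      proof (cases "y = 0")
        case True then show ?thesis using psi0 by auto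
      next
        case False
        then have "sin (\<psi> y) > 0" using sinpos y by simp
        then show ?thesis by auto
      qed
    qed
  qed (use psi0 in auto)
  have bnd: "\<forall>y\<ge>0. 0 \<le> \<phi> y - \<phi>0 y \<and> \<phi> y - \<phi>0 y \<le> pi"
  proof (intro allI impI)
    fix y :: real assume y: "y \<ge> 0"
    show "0 \<le> \<phi> y - \<phi>0 y \<and> \<phi> y - \<phi>0 y \<le> pi"
    proof (cases "y = 0")
      case True then show ?thesis using psi0 by (simp add: \<psi>_def)
    next
      case False
      then have s: "sin (\<psi> y) > 0" using sinpos y by simp
      have "\<psi> y \<ge> 0"
      proof (rule ccontr)
        assume "\<not> \<psi> y \<ge> 0"
        then have "sin (- \<psi> y) \<ge> 0" using b1 y by (intro sin_ge_zero) auto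
        then show False using s by simp
      qed
      moreover have "\<psi> y < pi" using b1 y by blast
      ultimately show ?thesis by (simp add: \<psi>_def)
    qed
  qed
  define v where "v y = RP (Suc n) (1 / (\<i> * complex_of_real y))" for y
  have vl: "(v \<longlongrightarrow> 1) at_top" unfolding v_def by (rule v_lim)
  have vn: "((\<lambda>y. v y / complex_of_real (cmod (v y))) \<longlongrightarrow> 1 / complex_of_real (cmod 1)) at_top"
    by (intro tendsto_intros vl) simp
  have ceq: "cos (\<phi> y - (real n * pi / 2 + pi / 2)) = Re (v y / complex_of_real (cmod (v y)))"
    if "y > 0" for y
  proof -
    have iy: "\<i> * complex_of_real y \<noteq> 0" using that by simp
    have un: "u (Suc n) y = (\<i> * complex_of_real y)^(Suc n) * v y"
      unfolding u_def v_def using Pm_RP[OF iy] .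
    have unz: "u (Suc n) y \<noteq> 0" using u_nz that by simp
    have vnz: "v y \<noteq> 0" using unz un by auto
    have c1: "cis (\<phi> y) = u (Suc n) y / of_real (cmod (u (Suc n) y))"
      by (rule cis_polar_inv[OF pol unz]) (use that in simp)
    have c2: "cis (- (real n * pi / 2 + pi / 2)) = (- \<i>)^(Suc n)"
    proof -
      have "(- \<i>)^(Suc n) = cis (- (pi/2)) ^ (Suc n)" by simp
      also have "\<dots> = cis (real (Suc n) * (- (pi/2)))" by (rule Complex.DeMoivre)
      also have "real (Suc n) * (- (pi/2)) = - (real n * pi / 2 + pi / 2)" by (simp add: algebra_simps)
      finally show ?thesis by simp
    qed
    have nrm: "cmod (u (Suc n) y) = y^(Suc n) * cmod (v y)"
      using that by (simp add: un norm_mult norm_power)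
    have "cis (\<phi> y - (real n * pi / 2 + pi / 2)) = cis (\<phi> y) * cis (- (real n * pi / 2 + pi / 2))"
      by (simp add: cis_mult algebra_simps)
    also have "\<dots> = ((\<i> * complex_of_real y)^(Suc n) * v y) * (- \<i>)^(Suc n) /
                      (of_real (y^(Suc n)) * of_real (cmod (v y)))"
    proof -
      have "cis (\<phi> y) = u (Suc n) y / of_real (y^(Suc n) * cmod (v y))" using c1 nrm by simp
      then show ?thesis unfolding c2 un by simp
    qed
    also have "\<dots> = v y / of_real (cmod (v y))"
    proof -
      have ii: "\<i>^(Suc n) * (-\<i>)^(Suc n) = 1"
        by (simp only: power_mult_distrib[symmetric]) simp
      have "((\<i> * complex_of_real y)^(Suc n) * v y) * (- \<i>)^(Suc n) = (\<i>^(Suc n) * (-\<i>)^(Suc n)) * (of_real (y^(Suc n)) * v y)"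
        by (simp only: power_mult_distrib of_real_power) (simp only: ac_simps)
      also have "\<dots> = of_real (y^(Suc n)) * v y" using ii by simp
      finally show ?thesis using that vnz by simp

    qed
    finally show ?thesis by (metis cis.sel(1))
  qed
  have cosl: "((\<lambda>y. cos (\<phi> y - (real n * pi / 2 + pi / 2))) \<longlongrightarrow> 1) at_top"
  proof -
    have "((\<lambda>y. Re (v y / complex_of_real (cmod (v y)))) \<longlongrightarrow> Re (1 / complex_of_real (cmod 1))) at_top"
      by (intro tendsto_intros vn)
    then have "((\<lambda>y. Re (v y / complex_of_real (cmod (v y)))) \<longlongrightarrow> 1) at_top" by simp
    moreover have "eventually (\<lambda>y. Re (v y / complex_of_real (cmod (v y))) = cos (\<phi> y - (real n * pi / 2 + pi / 2))) at_top"
      using eventually_gt_at_top[of "0::real"] by (rule eventually_mono) (simp only: ceq)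
    ultimately show ?thesis by (rule Lim_transform_eventually)
  qed
  have "(\<phi> \<longlongrightarrow> real n * pi / 2 + pi / 2) at_top"
    by (rule phase_limit[OF IH bnd cosl])
  moreover have "real n * pi / 2 + pi / 2 = real (Suc n) * pi / 2" by (simp add: algebra_simps)
  ultimately show ?case by simp
qed


lemma double_root_card:
  fixes p :: "complex poly"
  assumes p: "p \<noteq> 0" and r: "poly p a = 0" and d: "poly (pderiv p) a = 0"
  shows "card {x. poly p x = 0} < degree p"
proof -
  have dp: "pderiv p \<noteq> 0"
  proof
    assume "pderiv p = 0"
    then have "degree p = 0" by (simp add: pderiv_eq_0_iff)
    then obtain c where "p = [:c:]" by (metis degree_eq_zeroE)
    then show False using p r by simp
  qed
  have o1: "order a p = Suc (order a (pderiv p))" by (rule order_pderiv[OF p r])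
  have "order a (pderiv p) \<noteq> 0" using dp d by (simp add: order_root)
  then have o2: "order a p \<ge> 2" using o1 by simp
  have "[:-a, 1:]^2 dvd p" using order_1[of a p] o2 by (rule power_le_dvd)
  then obtain q where q: "p = [:-a, 1:]^2 * q" by (elim dvdE)
  have qnz: "q \<noteq> 0" using p q by auto
  have dq: "degree p = 2 + degree q"
    using q qnz by (simp add: degree_mult_eq degree_power_eq)
  have sub: "{x. poly p x = 0} \<subseteq> insert a {x. poly q x = 0}"
    using q by auto
  have "card {x. poly p x = 0} \<le> card (insert a {x. poly q x = 0})"
    by (rule card_mono) (simp add: poly_roots_finite[OF qnz], rule sub)
  also have "\<dots> \<le> Suc (card {x. poly q x = 0})" by (simp add: card_insert_if poly_roots_finite[OF qnz])
  also have "\<dots> \<le> Suc (degree q)" using card_poly_roots_bound[OF qnz] by simp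
  finally show ?thesis using dq by simp
qed

definition LL :: "nat \<Rightarrow> nat" where "LL m = (m+1) div 2 - 1"

definition QP :: "nat \<Rightarrow> complex poly" where
  "QP m = PP m - pcompose (PP m) [:0, -1:]"

lemma poly_QP: "poly (QP m) z = Pm m z - Pm m (-z)"
  by (simp add: QP_def poly_pcompose poly_PP)

lemma coeff_QP: "coeff (QP m) j = of_real (cf m j) * (1 - (-1)^j)"
  by (simp add: QP_def coeff_pcompose_linear coeff_PP algebra_simps)

lemma degree_QP: "degree (QP m) \<le> 2 * LL m + 1"
proof (rule degree_le, intro allI impI)
  fix j assume j: "2 * LL m + 1 < j"
  show "coeff (QP m) j = 0"
  proof (cases "j \<le> m")
    case True
    then have "j = m" "even m" using j unfolding LL_def by presburger+
    then show ?thesis by (simp add: coeff_QP)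
  next
    case False then show ?thesis by (simp add: coeff_QP cf_def)
  qed
qed

lemma QP_nz: "m \<ge> 1 \<Longrightarrow> QP m \<noteq> 0"
proof
  assume m: "m \<ge> 1" and "QP m = 0"
  then have "coeff (QP m) 1 = 0" by simp
  moreover have "cf m 1 > 0" using m by (intro cf_pos)
  ultimately show False by (simp add: coeff_QP)
qed

lemma dP_deriv: "(Pm m has_field_derivative dP m z) (at z within S)"
proof -
  have "Pm m = poly (PP m)" by (simp add: fun_eq_iff poly_PP)
  then show ?thesis unfolding dP_def by (metis poly_DERIV has_field_derivative_at_within)
qed

lemma dP_deriv_neg: "((\<lambda>z. Pm m (-z)) has_field_derivative - dP m (-z)) (at z within S)"
proof -
  have "((\<lambda>z. Pm m (-z)) has_field_derivative dP m (-z) * (-1)) (at z within S)"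
    by (rule DERIV_chain2[OF dP_deriv]) (auto intro!: derivative_eq_intros)
  then show ?thesis by simp
qed

lemma poly_pderiv_QP: "poly (pderiv (QP m)) z = dP m z + dP m (-z)"
  by (simp add: QP_def pderiv_pcompose poly_pcompose dP_def pderiv_diff pderiv_pCons)

definition Rf :: "nat \<Rightarrow> complex \<Rightarrow> complex" where
  "Rf m z = Pm m z / Pm m (-z)"

definition Rd :: "nat \<Rightarrow> complex \<Rightarrow> complex" where
  "Rd m z = (dP m z * Pm m (-z) + Pm m z * dP m (-z)) / (Pm m (-z))^2"

lemma Rf_deriv:
  assumes "Pm m (-z) \<noteq> 0"
  shows "(Rf m has_field_derivative Rd m z) (at z within S)"
proof -
  have "((\<lambda>z. Pm m z / Pm m (-z)) has_field_derivative
        (dP m z * Pm m (-z) - Pm m z * (- dP m (-z))) / (Pm m (-z) * Pm m (-z))) (at z within S)"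
    by (rule DERIV_divide[OF dP_deriv dP_deriv_neg assms])
  then show ?thesis unfolding Rf_def Rd_def by (simp add: power2_eq_square fun_eq_iff)
qed

lemma Rd_root:
  assumes m: "m \<ge> 1" and a: "Pm m a = Pm m (-a)" and nz: "Pm m a \<noteq> 0"
  shows "Rd m a = 1 + (-1)^(m+1) * a^(2*m) / (Pm m a)^2"
    and "Rd m a = poly (pderiv (QP m)) a / Pm m a"
proof -
  have "dP m a * Pm m (-a) + Pm m a * dP m (-a) = Pm m a * Pm m (-a) + (-1)^(m+1) * a^(2*m)"
    using I1_ident[OF m, of a] by (simp add: algebra_simps)
  then show "Rd m a = 1 + (-1)^(m+1) * a^(2*m) / (Pm m a)^2"
    unfolding Rd_def using a nz by (simp add: field_simps power2_eq_square)
  show "Rd m a = poly (pderiv (QP m)) a / Pm m a"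
    unfolding Rd_def poly_pderiv_QP using a nz by (simp add: field_simps power2_eq_square)
qed


definition rootf :: "(nat \<Rightarrow> real) \<Rightarrow> nat \<Rightarrow> complex" where
  "rootf r j = (if j = 1 then 0 else if even j then \<i> * of_real (r (j div 2)) else - \<i> * of_real (r (j div 2)))"

lemma rootf_inj:
  assumes pos: "\<forall>k\<in>{1..L}. r k > 0" and inj: "inj_on r {1..L}"
  shows "inj_on (rootf r) {1..2*L+1}"
proof (rule inj_onI)
  fix i j assume i: "i \<in> {1..2*L+1}" and j: "j \<in> {1..2*L+1}" and e: "rootf r i = rootf r j"
  have Imr: "Im (rootf r x) = (if x = 1 then 0 else if even x then r (x div 2) else - r (x div 2))" for x
    by (simp add: rootf_def)
  have dv: "x \<in> {1..2*L+1} \<Longrightarrow> x \<noteq> 1 \<Longrightarrow> x div 2 \<in> {1..L}" for x by auto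
  have ie: "Im (rootf r i) = Im (rootf r j)" using e by simp
  show "i = j"
  proof (cases "i = 1")
    case True
    show ?thesis
    proof (rule ccontr)
      assume "i \<noteq> j"
      then have "j \<noteq> 1" using True by simp
      moreover from this have "r (j div 2) > 0" using pos dv[OF j] by blast
      ultimately show False using ie True Imr[of j] Imr[of i] by (auto split: if_splits)
    qed
  next
    case False
    then have ri: "r (i div 2) > 0" using pos dv[OF i] by blast
    show ?thesis
    proof (cases "j = 1")
      case True
      then show ?thesis using ie False ri Imr[of j] Imr[of i] by (auto split: if_splits)
    next
      case jF: False
      then have rj: "r (j div 2) > 0" using pos dv[OF j] by blast
      have "even i = even j"
        using ie False jF ri rj Imr[of j] Imr[of i] by (auto split: if_splits)
      moreover have "r (i div 2) = r (j div 2)"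
        using ie False jF Imr[of j] Imr[of i] \<open>even i = even j\<close> by (auto split: if_splits)
      then have "i div 2 = j div 2" using inj dv[OF i False] dv[OF j jF] by (auto dest: inj_onD)
      ultimately show ?thesis by presburger
    qed
  qed
qed

lemma cis_kpi: "cis (real k * pi) = (-1)^k"
  by (metis Complex.DeMoivre cis_pi)

lemma Rf_iy:
  assumes "y \<ge> 0" "u m y = of_real (cmod (u m y)) * cis (\<phi> y)"
  shows "Rf m (\<i> * of_real y) = cis (2 * \<phi> y)"
proof -
  have nz: "u m y \<noteq> 0" using u_nz assms(1) by simp
  have "Pm m (- (\<i> * of_real y)) = cnj (u m y)" by (simp add: u_def Pm_cnj)
  then have "Rf m (\<i> * of_real y) = u m y / cnj (u m y)" by (simp add: Rf_def u_def)
  also have "\<dots> = cis (\<phi> y) / cis (- \<phi> y)"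
    using nz by (subst (1 2) assms(2)) (simp add: cis_cnj)
  also have "\<dots> = cis (2 * \<phi> y)" by (simp add: cis_divide)
  finally show ?thesis .
qed

lemma Re_div_ih: "Re ((w - 1) / (\<i> * complex_of_real h)) = Im w / h"
  by (cases "h = 0") (simp_all add: Re_divide power2_eq_square)

lemma roots_main:
  assumes m: "m \<ge> 1"
  obtains r where "\<forall>k\<in>{1..LL m}. r k > 0" "inj_on r {1..LL m}"
    "\<forall>z. Pm m z = Pm m (-z) \<longleftrightarrow> z \<in> rootf r ` {1..2*LL m+1}"
    "\<forall>z. Pm m z = Pm m (-z) \<longrightarrow> poly (pderiv (QP m)) z \<noteq> 0"
    "\<forall>k\<in>{1..LL m}. \<exists>p. Pm m (\<i> * of_real (r k)) = of_real p \<and> p \<noteq> 0 \<and> 0 < 1 - (r k)^(2*m) / p^2"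
proof -
  define L where "L = LL m"
  obtain \<phi> where Lf: "is_lift m \<phi>" using lift_exists by blast
  have cont: "continuous_on {0..} \<phi>" and z: "\<phi> 0 = 0"
    and pol: "\<And>y. y \<ge> 0 \<Longrightarrow> u m y = of_real (cmod (u m y)) * cis (\<phi> y)"
    using Lf by (auto simp: is_lift_def)
  have lim: "(\<phi> \<longlongrightarrow> real m * pi / 2) at_top" by (rule lift_limit[OF Lf])
  have Lm: "2 * L < m" unfolding L_def LL_def using m by presburger
  then have "real L * pi < real m * pi / 2"
  proof -
    have "real (2*L) < real m" using Lm by linarith
    then have "2 * real L * pi < real m * pi" by simp
    then show ?thesis by simp
  qed
  from order_tendstoD(1)[OF lim this] obtain N where N: "\<And>y. y \<ge> N \<Longrightarrow> \<phi> y > real L * pi"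
    by (auto simp: eventually_at_top_linorder)
  define Y where "Y = max N 0"
  have Y: "Y \<ge> 0" "\<phi> Y > real L * pi" using N by (auto simp: Y_def)
  have realpt: "Pm m (\<i> * of_real y) = Pm m (- (\<i> * of_real y)) \<and> Pm m (\<i> * of_real y) = of_real (cmod (u m y) * (-1)^k) \<and> cmod (u m y) * (-1)^k \<noteq> 0"
    if "y \<ge> 0" "\<phi> y = real k * pi" for y k
  proof -
    have e: "Pm m (\<i> * of_real y) = of_real (cmod (u m y) * (-1)^k)"
      using pol[OF that(1)] that(2) by (simp add: u_def cis_kpi)
    have "Pm m (- (\<i> * of_real y)) = cnj (Pm m (\<i> * of_real y))" by (simp add: Pm_cnj)
    also have "\<dots> = Pm m (\<i> * of_real y)" using e by simp
    finally show ?thesis using e u_nz[OF that(1)] by simp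
  qed
  have ex: "\<exists>x. 0 < x \<and> \<phi> x = real k * pi" if k: "k \<in> {1..L}" for k
  proof -
    have "\<phi> 0 \<le> real k * pi" using z by simp
    moreover have "real k * pi \<le> \<phi> Y" using Y k by (smt (verit) atLeastAtMost_iff mult_right_mono of_nat_mono pi_gt_zero)
    ultimately obtain x where x: "0 \<le> x" "x \<le> Y" "\<phi> x = real k * pi"
      using IVT'[of \<phi> 0 "real k * pi" Y] Y(1) continuous_on_subset[OF cont] by force
    have "x \<noteq> 0" using x z k by auto
    then show ?thesis by (intro exI[of _ x]) (use x in auto)
  qed
  obtain r where r: "\<And>k. k \<in> {1..L} \<Longrightarrow> 0 < r k \<and> \<phi> (r k) = real k * pi"
    using ex by metis
  have rpos: "\<forall>k\<in>{1..L}. r k > 0" using r by blast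
  have rinj: "inj_on r {1..L}"
  proof (rule inj_onI)
    fix i j assume "i \<in> {1..L}" "j \<in> {1..L}" "r i = r j"
    then have "real i * pi = real j * pi" using r by metis
    then show "i = j" by simp
  qed
  define Z where "Z = rootf r ` {1..2*L+1}"
  have cardZ: "card Z = 2*L+1"
    unfolding Z_def using card_image[OF rootf_inj[OF rpos rinj]] by simp
  have rootsQ: "{z. poly (QP m) z = 0} = {z. Pm m z = Pm m (-z)}" by (auto simp: poly_QP)
  have finQ: "finite {z. poly (QP m) z = 0}" using poly_roots_finite[OF QP_nz[OF m]] .
  have ZsubQ: "Z \<subseteq> {z. poly (QP m) z = 0}"
  proof
    fix z assume "z \<in> Z"
    then obtain j where j: "j \<in> {1..2*L+1}" "z = rootf r j" unfolding Z_def by blast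
    show "z \<in> {z. poly (QP m) z = 0}"
    proof (cases "j = 1")
      case True then show ?thesis using j by (simp add: rootf_def poly_QP)
    next
      case False
      then have k: "j div 2 \<in> {1..L}" using j by auto
      have rp: "Pm m (\<i> * of_real (r (j div 2))) = Pm m (- (\<i> * of_real (r (j div 2))))"
        using realpt[of "r (j div 2)" "j div 2"] r[OF k] by auto
      show ?thesis using j False rp by (auto simp: rootf_def poly_QP)
    qed
  qed
  have cardQ: "card {z. poly (QP m) z = 0} \<le> 2*L+1"
    using card_poly_roots_bound[OF QP_nz[OF m]] degree_QP[of m] unfolding L_def by linarith
  have QZ: "Z = {z. poly (QP m) z = 0}"
    by (rule card_seteq[OF finQ ZsubQ]) (use cardZ cardQ in simp)
  have roots: "\<forall>z. Pm m z = Pm m (-z) \<longleftrightarrow> z \<in> rootf r ` {1..2*LL m+1}"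
    using QZ unfolding Z_def L_def by (auto simp: poly_QP)
  have simple: "\<forall>z. Pm m z = Pm m (-z) \<longrightarrow> poly (pderiv (QP m)) z \<noteq> 0"
  proof (intro allI impI notI)
    fix z assume "Pm m z = Pm m (-z)" "poly (pderiv (QP m)) z = 0"
    then have "card {x. poly (QP m) x = 0} < degree (QP m)"
      by (intro double_root_card QP_nz m) (simp_all add: poly_QP)
    then show False using QZ cardZ degree_QP[of m] unfolding L_def by simp
  qed
  have sgn: "\<exists>p. Pm m (\<i> * of_real (r k)) = of_real p \<and> p \<noteq> 0 \<and> 0 < 1 - (r k)^(2*m) / p^2"
    if k: "k \<in> {1..L}" for k
  proof -
    define r0 where "r0 = r k"
    have r0: "0 < r0" "\<phi> r0 = real k * pi" using r[OF k] by (auto simp: r0_def)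
    define p where "p = cmod (u m r0) * (-1)^k"
    have pe: "Pm m (\<i> * of_real r0) = of_real p" "Pm m (- (\<i> * of_real r0)) = of_real p" "p \<noteq> 0"
      using realpt[of r0 k] r0 unfolding p_def by auto
    define a where "a = \<i> * complex_of_real r0"
    have a2m: "a^(2*m) = (-1)^m * of_real (r0^(2*m))"
      unfolding a_def by (simp add: power_mult_distrib power_mult) (metis power_minus)
    have Rda: "Rd m a = of_real (1 - r0^(2*m) / p^2)"
    proof -
      have "Rd m a = 1 + (-1)^(m+1) * a^(2*m) / (Pm m a)^2"
        by (rule Rd_root(1)[OF m]) (use pe in \<open>simp_all add: a_def\<close>)
      also have "\<dots> = 1 + ((-1)^(m+1) * (-1)^m) * of_real (r0^(2*m)) / (of_real p)^2"
      proof -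
        have Pa': "Pm m a = of_real p" using pe by (simp add: a_def)
        show ?thesis unfolding a2m Pa' by (simp only: mult.assoc)
      qed
      also have "(-1::complex)^(m+1) * (-1)^m = -1"
        by (simp flip: power_add add: power_mult[symmetric] mult_2[symmetric] )
      finally show ?thesis by simp
    qed
    have Rdnz: "Rd m a \<noteq> 0"
    proof -
      have "Rd m a = poly (pderiv (QP m)) a / Pm m a"
        by (rule Rd_root(2)[OF m]) (use pe in \<open>simp_all add: a_def\<close>)
      moreover have "poly (pderiv (QP m)) a \<noteq> 0" using simple pe by (simp add: a_def)
      ultimately show ?thesis using pe by (simp add: a_def)
    qed
    define c where "c = 1 - r0^(2*m) / p^2"
    have cnz: "c \<noteq> 0" using Rdnz unfolding Rda c_def[symmetric] by simp
    have "c \<ge> 0"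
    proof (rule ccontr)
      assume cneg: "\<not> c \<ge> 0"
      have above: "\<phi> y > real k * pi" if y: "y > r0" for y
      proof (rule ccontr)
        assume "\<not> \<phi> y > real k * pi"
        then have le: "\<phi> y \<le> real k * pi" by simp
        define Y2 where "Y2 = max y N"
        have "\<phi> Y2 > real L * pi" using N by (simp add: Y2_def)
        moreover have "real k * pi \<le> real L * pi" using k by simp
        ultimately have ge: "real k * pi \<le> \<phi> Y2" by linarith
        have "continuous_on {y..Y2} \<phi>" using r0 y by (intro continuous_on_subset[OF cont]) auto
        then obtain s where s: "y \<le> s" "s \<le> Y2" "\<phi> s = real k * pi"
          using IVT'[of \<phi> y "real k * pi" Y2] le ge by (auto simp: Y2_def)
        have s0: "s > 0" using s y r0 by linarith
        have "\<i> * of_real s \<in> Z"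
          using QZ realpt[of s k] s s0 by (auto simp: poly_QP)
        then obtain j where j: "j \<in> {1..2*L+1}" "\<i> * of_real s = rootf r j" unfolding Z_def by blast
        have jn1: "j \<noteq> 1" using j s0 by (auto simp: rootf_def)
        then have kj: "j div 2 \<in> {1..L}" using j by auto
        have "even j"
        proof (rule ccontr)
          assume "odd j"
          then have "s = - r (j div 2)" using j jn1 by (simp add: rootf_def complex_eq_iff)
          then show False using s0 r[OF kj] by simp
        qed
        then have "s = r (j div 2)" using j jn1 by (simp add: rootf_def complex_eq_iff)
        then have "real (j div 2) * pi = real k * pi" using r[OF kj] s by simp
        then have "j div 2 = k" by simp
        then have "s = r0" using \<open>s = r (j div 2)\<close> by (simp add: r0_def)
        then show False using s y by simp
      qed
      obtain e where e: "e > 0" "\<And>y. y \<ge> 0 \<Longrightarrow> dist y r0 < e \<Longrightarrow> dist (\<phi> y) (\<phi> r0) < pi/2"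
        using cont r0 unfolding continuous_on_iff
        by (metis atLeast_iff divide_pos_pos less_eq_real_def pi_gt_zero zero_less_numeral)
      have impos: "Im (Rf m (\<i> * of_real y)) > 0" if y: "r0 < y" "y < r0 + e" for y
      proof -
        have y0: "y \<ge> 0" using y r0 by linarith
        have "\<bar>\<phi> y - \<phi> r0\<bar> < pi/2" using e(2)[OF y0] y r0 by (simp add: dist_real_def)
        then have "\<phi> y < real k * pi + pi/2" using r0 abs_less_iff[of "\<phi> y - \<phi> r0" "pi/2"] by linarith
        moreover have "\<phi> y > real k * pi" using above y by simp
        ultimately have t: "0 < 2 * \<phi> y - 2 * pi * real k" "2 * \<phi> y - 2 * pi * real k < pi"
          by (simp_all add: algebra_simps)
        have "Im (Rf m (\<i> * of_real y)) = sin (2 * \<phi> y)"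
          using Rf_iy[of y m \<phi>, OF y0 pol[OF y0]] by simp
        also have "\<dots> = sin ((2 * \<phi> y - 2 * pi * real k) + 2 * pi * of_int (int k))"
          by simp
        also have "\<dots> = sin (2 * \<phi> y - 2 * pi * real k)"
          by (simp only: sin_add cos_int_2pin sin_int_2pin)
        also have "\<dots> > 0" using t by (rule sin_gt_zero)
        finally show ?thesis .
      qed
      have Pa: "Pm m (-a) \<noteq> 0" using pe by (simp add: a_def)
      have Rfa: "Rf m a = 1" using pe by (simp add: Rf_def a_def)
      have D: "((\<lambda>z. (Rf m z - Rf m a) / (z - a)) \<longlongrightarrow> Rd m a) (at a)"
        using Rf_deriv[OF Pa, of UNIV] by (simp add: has_field_derivative_iff)
      have g: "filterlim (\<lambda>h::real. a + \<i> * of_real h) (at a) (at_right 0)"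
      proof (rule filterlim_atI)
        have "((\<lambda>h::real. a + \<i> * of_real h) \<longlongrightarrow> a + \<i> * of_real 0) (at_right 0)"
          by (intro tendsto_intros)
        then show "((\<lambda>h::real. a + \<i> * of_real h) \<longlongrightarrow> a) (at_right 0)" by simp
        show "eventually (\<lambda>h::real. a + \<i> * of_real h \<noteq> a) (at_right 0)"
          by (rule eventually_mono[OF eventually_at_right_less]) simp
      qed
      have D2: "((\<lambda>h. Re ((Rf m (a + \<i> * of_real h) - Rf m a) / (a + \<i> * of_real h - a))) \<longlongrightarrow> Re (Rd m a)) (at_right 0)"
        by (intro tendsto_intros filterlim_compose[OF D g])
      have "Re ((Rf m (a + \<i> * of_real h) - Rf m a) / (a + \<i> * of_real h - a)) = Im (Rf m (a + \<i> * of_real h)) / h" for h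
        using Rfa Re_div_ih by simp
      then have D3: "((\<lambda>h. Im (Rf m (a + \<i> * of_real h)) / h) \<longlongrightarrow> c) (at_right 0)"
        using D2 Rda by (simp add: c_def)
      have "eventually (\<lambda>h. Im (Rf m (a + \<i> * of_real h)) / h < 0) (at_right 0)"
        using order_tendstoD(2)[OF D3] cneg by simp
      then obtain b where b: "b > 0" "\<And>h. h > 0 \<Longrightarrow> h < b \<Longrightarrow> Im (Rf m (a + \<i> * of_real h)) / h < 0"
        by (auto simp: eventually_at_right_field)
      define h where "h = min b e / 2"
      have h: "h > 0" "h < b" "h < e" using b e by (auto simp: h_def)
      have "Im (Rf m (a + \<i> * of_real h)) / h < 0" using b h by simp
      moreover have "a + \<i> * of_real h = \<i> * of_real (r0 + h)" by (simp add: a_def algebra_simps)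
      moreover have "Im (Rf m (\<i> * of_real (r0 + h))) > 0" using impos[of "r0 + h"] h by simp
      ultimately show False using h by (simp add: divide_less_0_iff)
    qed
    then have "c > 0" using cnz by simp
    then show ?thesis using pe by (auto simp: r0_def c_def)
  qed
  show ?thesis
    by (rule that[OF rpos[unfolded L_def] rinj[unfolded L_def] roots simple]) (use sgn in \<open>simp add: L_def\<close>)
qed


lemma ev_at0_ball: "r > 0 \<Longrightarrow> eventually (\<lambda>t::complex. t \<noteq> 0 \<and> t \<in> ball 0 r) (at 0)"
  by (auto simp: eventually_at dist_commute intro!: exI[of _ r])

lemma isCont_bounded_ev:
  fixes h :: "complex \<Rightarrow> complex"
  assumes "isCont h 0"
  shows "eventually (\<lambda>t. norm (h t) \<le> norm (h 0) + 1) (at 0)"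
proof -
  have "eventually (\<lambda>t. dist (h t) (h 0) < 1) (at 0)"
    using assms unfolding isCont_def by (rule tendstoD) simp
  then show ?thesis
    by (rule eventually_mono) (metis dist_norm norm_triangle_sub add.commute less_eq_real_def order_trans add_le_cancel_left)
qed

lemma holo_isCont: "f holomorphic_on ball 0 r \<Longrightarrow> r > 0 \<Longrightarrow> isCont f 0"
  by (metis centre_in_ball continuous_on_eq_continuous_at holomorphic_on_imp_continuous_on open_ball)

lemma holo_rem2:
  fixes f :: "complex \<Rightarrow> complex"
  assumes hol: "f holomorphic_on ball 0 r" and r: "r > 0"
  shows "(\<lambda>t. f t - f 0 - deriv f 0 * t) \<in> O[at 0](\<lambda>t. t^2)"
proof -
  have i0: "0 \<in> interior (ball (0::complex) r)" using r by simp
  define g where "g = (\<lambda>z. if z = 0 then deriv f 0 else (f z - f 0) / (z - 0))"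
  have hg: "g holomorphic_on ball 0 r" unfolding g_def by (rule pole_lemma[OF hol i0])
  define h where "h = (\<lambda>z. if z = 0 then deriv g 0 else (g z - g 0) / (z - 0))"
  have hh: "h holomorphic_on ball 0 r" unfolding h_def by (rule pole_lemma[OF hg i0])
  have ch: "isCont h 0" by (rule holo_isCont[OF hh r])
  have "eventually (\<lambda>t. norm (f t - f 0 - deriv f 0 * t) \<le> (norm (h 0) + 1) * norm (t^2)) (at 0)"
    using isCont_bounded_ev[OF ch] ev_at0_ball[OF r]
  proof eventually_elim
    case (elim t)
    then have "f t - f 0 - deriv f 0 * t = t^2 * h t"
      by (simp add: g_def h_def field_simps power2_eq_square)
    then show ?case using elim by (simp add: norm_mult mult_right_mono mult.commute)
  qed
  then show ?thesis by (rule bigoI)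
qed

lemma inv_asymp:
  fixes f :: "complex \<Rightarrow> complex"
  assumes hol: "f holomorphic_on ball 0 r" and r: "r > 0" and f0: "f 0 = 0" and c: "deriv f 0 \<noteq> 0"
  shows "(\<lambda>t. 1 / f t - (1 / deriv f 0) / t) \<in> O[at 0](\<lambda>_. 1)"
proof -
  define c where "c = deriv f 0"
  have i0: "0 \<in> interior (ball (0::complex) r)" using r by simp
  define g where "g = (\<lambda>z. if z = 0 then deriv f 0 else (f z - f 0) / (z - 0))"
  have hg: "g holomorphic_on ball 0 r" unfolding g_def by (rule pole_lemma[OF hol i0])
  define h where "h = (\<lambda>z. if z = 0 then deriv g 0 else (g z - g 0) / (z - 0))"
  have hh: "h holomorphic_on ball 0 r" unfolding h_def by (rule pole_lemma[OF hg i0])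
  have g0: "g 0 = c" by (simp add: g_def c_def)
  have cg: "isCont g 0" by (rule holo_isCont[OF hg r])
  have "eventually (\<lambda>t. dist (g t) (g 0) < norm c / 2) (at 0)"
    using cg unfolding isCont_def by (rule tendstoD) (use c in \<open>simp add: c_def\<close>)
  then have evg: "eventually (\<lambda>t. norm (g t) \<ge> norm c / 2) (at 0)"
  proof (rule eventually_mono)
    fix t assume "dist (g t) (g 0) < norm c / 2"
    then have "norm (c - g t) < norm c / 2" using g0 by (simp add: dist_norm norm_minus_commute)
    moreover have "norm c \<le> norm (c - g t) + norm (g t)" by (metis diff_add_cancel norm_triangle_ineq)
    ultimately show "norm (g t) \<ge> norm c / 2" by linarith
  qed
  have cpos: "norm c > 0" using c by (simp add: c_def)
  have "eventually (\<lambda>t. norm (1 / f t - (1 / deriv f 0) / t) \<le> ((norm (h 0) + 1) / (norm c * (norm c / 2))) * norm (1::complex)) (at 0)"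
    using isCont_bounded_ev[OF holo_isCont[OF hh r]] ev_at0_ball[OF r] evg
  proof eventually_elim
    case (elim t)
    have gt: "g t \<noteq> 0" using elim(3) cpos by auto
    have ft: "f t = t * g t" using elim(2) f0 by (simp add: g_def)
    have ht: "h t = (g t - c) / t" using elim(2) g0 by (simp add: h_def)
    have "1 / f t - (1 / deriv f 0) / t = - h t / (c * g t)"
      using elim(2) gt c unfolding ft ht c_def[symmetric] by (simp add: field_simps)
    also have "norm \<dots> = norm (h t) / (norm c * norm (g t))" by (simp add: norm_divide norm_mult)
    also have "\<dots> \<le> (norm (h 0) + 1) / (norm c * (norm c / 2))"
      using elim(1) elim(3) cpos by (intro frac_le mult_left_mono) auto
    finally show ?case by simp
  qed
  then show ?thesis by (rule bigoI)
qed

lemma local_branch: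
  fixes F :: "complex \<Rightarrow> complex"
  assumes S: "open S" "a \<in> S" and hol: "F holomorphic_on S" and Fa: "F a = 1"
    and d: "deriv F a \<noteq> 0" and eps: "\<epsilon> > 0"
  obtains \<rho> \<zeta> r where "\<rho> > 0" "\<rho> \<le> \<epsilon>" "ball a \<rho> \<subseteq> S"
    "eventually (\<lambda>t. \<zeta> t \<in> ball a \<rho> \<and> F (\<zeta> t) = exp t) (nhds 0)"
    "\<And>t z. z \<in> ball a \<rho> \<Longrightarrow> F z = exp t \<Longrightarrow> z = \<zeta> t"
    "\<zeta> 0 = a" "r > 0" "\<zeta> holomorphic_on ball 0 r" "deriv \<zeta> 0 = 1 / deriv F a"
proof -
  define S' where "S' = S \<inter> ball a \<epsilon>"
  have S': "open S'" "a \<in> S'" using S eps by (auto simp: S'_def)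
  have hol': "F holomorphic_on S'" using hol by (rule holomorphic_on_subset) (auto simp: S'_def)
  obtain \<rho> where \<rho>: "\<rho> > 0" "ball a \<rho> \<subseteq> S'" "open (F ` ball a \<rho>)" "inj_on F (ball a \<rho>)"
    using has_complex_derivative_locally_invertible[OF hol' S'(2) S'(1) d] by blast
  have holb: "F holomorphic_on ball a \<rho>" using hol' \<rho>(2) by (rule holomorphic_on_subset)
  obtain G where G: "G holomorphic_on (F ` ball a \<rho>)"
      "\<And>z. z \<in> ball a \<rho> \<Longrightarrow> deriv F z * deriv G (F z) = 1"
      "\<And>z. z \<in> ball a \<rho> \<Longrightarrow> G (F z) = z"
    using holomorphic_has_inverse[OF holb open_ball \<rho>(4)] by blast
  define V where "V = F ` ball a \<rho>"
  have aV: "a \<in> ball a \<rho>" using \<rho> by simp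
  have oneV: "1 \<in> V" using aV Fa unfolding V_def by force
  define \<zeta> where "\<zeta> t = G (exp t)" for t
  have inV: "\<zeta> t \<in> ball a \<rho> \<and> F (\<zeta> t) = exp t" if tV: "exp t \<in> V" for t
  proof -
    obtain z where z: "z \<in> ball a \<rho>" "exp t = F z" using tV unfolding V_def by blast
    then show ?thesis using G(3)[OF z(1)] by (simp add: \<zeta>_def)
  qed
  have openW: "open {t. exp t \<in> V}"
    using open_vimage[OF \<rho>(3)[folded V_def], of exp] continuous_on_exp[of UNIV "\<lambda>x. x"]
    by (simp add: vimage_def)
  have "eventually (\<lambda>t. t \<in> {t. exp t \<in> V}) (nhds 0)"
    by (rule eventually_nhds_in_open[OF openW]) (simp add: oneV)
  then have "eventually (\<lambda>t. exp t \<in> V) (nhds 0)" by simp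
  then have ev: "eventually (\<lambda>t. \<zeta> t \<in> ball a \<rho> \<and> F (\<zeta> t) = exp t) (nhds 0)"
    by (rule eventually_mono) (use inV in blast)
  have uniq: "z = \<zeta> t" if "z \<in> ball a \<rho>" "F z = exp t" for t z
    using G(3)[OF that(1)] that(2) by (simp add: \<zeta>_def)
  have z0: "\<zeta> 0 = a" using G(3)[OF aV] Fa by (simp add: \<zeta>_def)
  obtain r where r: "r > 0" "ball 0 r \<subseteq> {t. exp t \<in> V}"
    using openW oneV by (metis mem_Collect_eq exp_zero openE)
  have holz: "\<zeta> holomorphic_on ball 0 r"
  proof -
    have "(G \<circ> exp) holomorphic_on ball 0 r"
      by (rule holomorphic_on_compose_gen[OF holomorphic_on_exp G(1)]) (use r in \<open>auto simp: V_def\<close>)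
    moreover have "\<zeta> = G \<circ> exp" by (simp add: fun_eq_iff \<zeta>_def)
    ultimately show ?thesis by simp
  qed
  have dG: "(G has_field_derivative deriv G 1) (at 1)"
    using holomorphic_derivI[OF G(1) \<rho>(3) oneV[unfolded V_def]] .
  have "(\<zeta> has_field_derivative deriv G (exp 0) * exp 0) (at 0)"
    unfolding \<zeta>_def by (rule DERIV_chain2) (use dG in simp, rule DERIV_exp)
  then have "deriv \<zeta> 0 = deriv G 1" by (simp add: DERIV_imp_deriv)
  also have "deriv G 1 = 1 / deriv F a" using G(2)[OF aV] Fa d by (simp add: field_simps)
  finally have dz: "deriv \<zeta> 0 = 1 / deriv F a" .
  have "ball a \<rho> \<subseteq> ball a \<epsilon>" using \<rho>(2) by (auto simp: S'_def)
  then have re: "\<rho> \<le> \<epsilon>" using \<rho>(1) by (simp add: ball_subset_ball_iff)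
  show ?thesis
    by (rule that[of \<rho> \<zeta> r]) (use \<rho> re S'_def ev uniq z0 r holz dz in auto)
qed


lemma ev_nhds_at: "eventually P (nhds (0::complex)) \<Longrightarrow> eventually P (at 0)"
  by (rule filter_leD[OF at_within_le_nhds])

definition SP :: "nat \<Rightarrow> complex set" where "SP m = {z. Pm m (-z) \<noteq> 0}"

lemma open_SP: "open (SP m)"
proof -
  have "continuous_on UNIV (\<lambda>z. Pm m (-z))"
    by (rule continuous_on_compose2[OF cont_Pm[of UNIV m]]) (auto intro: continuous_intros)
  then show ?thesis unfolding SP_def
    using open_Collect_neq[OF _ continuous_on_const] by blast
qed

lemma Rf_holo: "Rf m holomorphic_on SP m"
  unfolding holomorphic_on_def SP_def
  using Rf_deriv by (auto simp: field_differentiable_def)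

lemma deriv_Rf: "Pm m (-z) \<noteq> 0 \<Longrightarrow> deriv (Rf m) z = Rd m z"
  by (rule DERIV_imp_deriv[OF Rf_deriv])

lemma Pm0_nz: "Pm m 0 \<noteq> 0"
  using cf_pos[of 0 m] by (simp add: Pm_at0)

lemma H_bound:
  assumes m: "m \<ge> 1"
  obtains \<rho>1 B where "\<rho>1 > 0" "B \<ge> 0"
    "\<And>z. norm z \<le> \<rho>1 \<Longrightarrow> Pm m (-z) \<noteq> 0 \<and> norm (Rf m z * exp (-z) - 1) \<le> B * norm z ^ (2*m+1)"
proof -
  have "0 \<in> SP m" by (simp add: SP_def Pm0_nz)
  then obtain \<rho>1 where \<rho>1: "\<rho>1 > 0" "cball 0 \<rho>1 \<subseteq> SP m"
    using open_SP open_contains_cball by blast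
  define k where "k w = exp (-w) / (Pm m (-w))^2" for w
  have "continuous_on (cball 0 \<rho>1) k"
  proof -
    have "continuous_on (cball 0 \<rho>1) (\<lambda>w. Pm m (-w))"
      by (rule continuous_on_compose2[OF cont_Pm[of UNIV m]]) (auto intro: continuous_intros)
    then show ?thesis unfolding k_def using \<rho>1(2)
      by (intro continuous_intros) (auto simp: SP_def)
  qed
  then have "bounded (k ` cball 0 \<rho>1)"
    by (intro compact_imp_bounded compact_continuous_image) auto
  then obtain B0 where "\<forall>x\<in>k ` cball 0 \<rho>1. norm x \<le> B0"
    by (auto simp: bounded_iff)
  then have B0: "\<And>w. w \<in> cball 0 \<rho>1 \<Longrightarrow> norm (k w) \<le> B0" by blast
  define B where "B = max B0 0"
  have B: "B \<ge> 0" "\<And>w. w \<in> cball 0 \<rho>1 \<Longrightarrow> norm (k w) \<le> B"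
    using B0 by (auto simp: B_def intro: order_trans[OF _ max.cobounded1])
  define H where "H w = Rf m w * exp (-w) - 1" for w
  define H' where "H' w = k w * ((-1)^(m+1) * w^(2*m))" for w
  have dH: "(H has_field_derivative H' w) (at w within A)" if "w \<in> SP m" for w A
  proof -
    have Pw: "Pm m (-w) \<noteq> 0" using that by (simp add: SP_def)
    have d1: "(Rf m has_field_derivative Rd m w) (at w within A)" by (rule Rf_deriv[OF Pw])
    have d2: "((\<lambda>w. exp (-w)) has_field_derivative exp (-w) * (-1)) (at w within A)"
      by (rule DERIV_chain2[OF DERIV_exp]) (auto intro!: derivative_eq_intros)
    have d3: "((\<lambda>w. Rf m w * exp (-w)) has_field_derivative Rf m w * (exp (-w) * (-1)) + Rd m w * exp (-w)) (at w within A)"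
      by (rule DERIV_mult'[OF d1 d2])
    have "(H has_field_derivative Rd m w * exp (-w) + Rf m w * (exp (-w) * (-1)) - 0) (at w within A)"
      unfolding H_def using DERIV_diff[OF d3 DERIV_const[of 1]] by (simp add: algebra_simps)
    moreover have "Rd m w * exp (-w) + Rf m w * (exp (-w) * (-1)) - 0 = H' w"
    proof -
      have I: "dP m w * Pm m (-w) + Pm m w * dP m (-w) - Pm m w * Pm m (-w) = (-1)^(m+1) * w^(2*m)"
        by (rule I1_ident[OF m])
      have "Rd m w - Rf m w = (-1)^(m+1) * w^(2*m) / (Pm m (-w))^2"
        unfolding Rd_def Rf_def I[symmetric] using Pw by (simp add: field_simps power2_eq_square)
      have "Rd m w * exp (-w) + Rf m w * (exp (-w) * (-1)) - 0 = (Rd m w - Rf m w) * exp (-w)"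
        by (simp add: algebra_simps)
      also have "\<dots> = (-1)^(m+1) * w^(2*m) / (Pm m (-w))^2 * exp (-w)"
        by (simp only: \<open>Rd m w - Rf m w = (-1)^(m+1) * w^(2*m) / (Pm m (-w))^2\<close>)
      also have "\<dots> = H' w" unfolding H'_def k_def by (simp add: field_simps)
      finally show ?thesis .
    qed
    ultimately show ?thesis by simp
  qed
  have H0: "H 0 = 0" using Pm0_nz by (simp add: H_def Rf_def)
  have "Pm m (-z) \<noteq> 0 \<and> norm (H z) \<le> B * norm z ^ (2*m+1)" if z: "norm z \<le> \<rho>1" for z
  proof
    show "Pm m (-z) \<noteq> 0" using \<rho>1(2) z by (auto simp: SP_def)
    have "cball 0 (norm z) \<subseteq> cball 0 \<rho>1" using z by (rule subset_cball)
    then have sub: "cball 0 (norm z) \<subseteq> SP m" using \<rho>1(2) by (rule order_trans)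
    have "norm (H z - H 0) \<le> (B * norm z ^ (2*m)) * norm (z - 0)"
    proof (rule field_differentiable_bound[of "cball 0 (norm z)" H H'])
      show "convex (cball (0::complex) (norm z))" by (rule convex_cball)
      show "(H has_field_derivative H' w) (at w within cball 0 (norm z))" if "w \<in> cball 0 (norm z)" for w
        using dH sub that by blast
      show "norm (H' w) \<le> B * norm z ^ (2*m)" if w: "w \<in> cball 0 (norm z)" for w
      proof -
        have "norm (H' w) = norm (k w) * norm w ^ (2*m)" by (simp add: H'_def norm_mult norm_power)
        also have "\<dots> \<le> B * norm z ^ (2*m)"
          using w z B by (intro mult_mono power_mono) auto
        finally show ?thesis .
      qed
    qed auto
    then show "norm (H z) \<le> B * norm z ^ (2*m+1)" using H0 by (simp add: mult_ac)
  qed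
  then show ?thesis using that[OF \<rho>1(1) B(1)] unfolding H_def by blast
qed

lemma exp_lower: "eventually (\<lambda>w::complex. norm w \<le> 2 * norm (exp w - 1)) (nhds 0)"
proof -
  have "((\<lambda>w. (exp w - exp 0) / (w - 0)) \<longlongrightarrow> exp (0::complex)) (at 0)"
    using DERIV_exp[of 0] by (simp only: has_field_derivative_iff)
  then have "((\<lambda>w. (exp w - 1) / w) \<longlongrightarrow> 1) (at (0::complex))" by simp
  then have "eventually (\<lambda>w. dist ((exp w - 1) / w) 1 < 1/2) (at (0::complex))"
    by (rule tendstoD) simp
  then have "eventually (\<lambda>w. w \<noteq> 0 \<longrightarrow> dist ((exp w - 1) / w) 1 < 1/2) (nhds (0::complex))"
    by (simp add: eventually_at_filter)
  moreover have "norm w \<le> 2 * norm (exp w - 1)" if h: "w \<noteq> 0 \<longrightarrow> dist ((exp w - 1) / w) 1 < 1/2" for w :: complex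
  proof -
    show "norm w \<le> 2 * norm (exp w - 1)"
    proof (cases "w = 0")
      case False
      then have d: "norm ((exp w - 1) / w - 1) < 1/2" using h by (simp add: dist_norm)
      have "norm ((exp w - 1) / w - ((exp w - 1) / w - 1)) \<le> norm ((exp w - 1) / w) + norm ((exp w - 1) / w - 1)"
        by (rule norm_triangle_ineq4)
      then have "1 \<le> norm ((exp w - 1) / w) + norm ((exp w - 1) / w - 1)" by simp
      then have "norm ((exp w - 1) / w) \<ge> 1/2" using d by linarith
      then show ?thesis using False by (simp add: norm_divide field_simps)
    qed simp
  qed
  ultimately show ?thesis by (rule eventually_mono)
qed

lemma zh1_est:
  assumes m: "m \<ge> 1" and hol: "\<zeta> holomorphic_on ball 0 r" and r: "r > 0" and z0: "\<zeta> 0 = 0"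
    and d: "deriv \<zeta> 0 = 1" and ev: "eventually (\<lambda>t. Rf m (\<zeta> t) = exp t) (at 0)"
  shows "(\<lambda>t. \<zeta> t - t) \<in> O[at 0](\<lambda>t. t ^ (2*m+1))"
proof -
  obtain \<rho>1 B where \<rho>1: "\<rho>1 > 0" "B \<ge> 0"
    "\<And>z. norm z \<le> \<rho>1 \<Longrightarrow> Pm m (-z) \<noteq> 0 \<and> norm (Rf m z * exp (-z) - 1) \<le> B * norm z ^ (2*m+1)"
    using H_bound[OF m] by blast
  have "(\<lambda>t. \<zeta> t - \<zeta> 0 - deriv \<zeta> 0 * t) \<in> O[at 0](\<lambda>t. t^2)" by (rule holo_rem2[OF hol r])
  then have "(\<lambda>t. \<zeta> t - t) \<in> O[at 0](\<lambda>t. t^2)" using z0 d by simp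
  then obtain c where c: "c > 0" "eventually (\<lambda>t. norm (\<zeta> t - t) \<le> c * norm (t^2)) (at 0)"
    by (elim landau_o.bigE)
  have "eventually (\<lambda>t::complex. t \<noteq> 0 \<and> t \<in> ball 0 (1/c)) (at 0)"
    using c(1) by (intro ev_at0_ball) simp
  then have e1: "eventually (\<lambda>t::complex. norm t < 1 / c) (at 0)"
    by (rule eventually_mono) simp
  have e2: "eventually (\<lambda>t. norm (\<zeta> t) \<le> 2 * norm t) (at 0)"
    using c(2) e1
  proof eventually_elim
    case (elim t)
    have "c * norm (t^2) = (c * norm t) * norm t" by (simp add: norm_power power2_eq_square mult.assoc norm_mult)
    also have "\<dots> \<le> 1 * norm t" using elim(2) c(1)
      by (intro mult_right_mono) (auto simp: field_simps)
    finally have "norm (\<zeta> t - t) \<le> norm t" using elim(1) by simp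
    then show ?case by (metis diff_add_cancel mult_2 norm_triangle_mono order_refl)
  qed
  have cz: "isCont \<zeta> 0" by (rule holo_isCont[OF hol r])
  then have "(\<zeta> \<longlongrightarrow> 0) (at 0)" using z0 unfolding isCont_def by simp
  then have e3: "eventually (\<lambda>t. norm (\<zeta> t) \<le> \<rho>1) (at 0)"
    using tendstoD[of \<zeta> 0 "at 0" \<rho>1] \<rho>1(1) by (auto elim: eventually_mono)
  have wl: "filterlim (\<lambda>t. t - \<zeta> t) (nhds 0) (at 0)"
    using \<open>(\<zeta> \<longlongrightarrow> 0) (at 0)\<close> by (intro tendsto_eq_intros) auto
  have e4: "eventually (\<lambda>t. norm (t - \<zeta> t) \<le> 2 * norm (exp (t - \<zeta> t) - 1)) (at 0)"
    using exp_lower wl by (rule eventually_compose_filterlim)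
  have "eventually (\<lambda>t. norm (\<zeta> t - t) \<le> (2 * B * 2^(2*m+1)) * norm (t ^ (2*m+1))) (at 0)"
    using ev e2 e3 e4
  proof eventually_elim
    case (elim t)
    have "Rf m (\<zeta> t) * exp (- \<zeta> t) - 1 = exp (t - \<zeta> t) - 1"
      using elim(1) by (simp add: exp_diff field_simps exp_minus)
    then have "norm (exp (t - \<zeta> t) - 1) \<le> B * norm (\<zeta> t) ^ (2*m+1)"
      using \<rho>1(3)[OF elim(3)] by simp
    also have "\<dots> \<le> B * (2 * norm t) ^ (2*m+1)"
      using elim(2) \<rho>1(2) by (intro mult_left_mono power_mono) auto
    finally have "norm (t - \<zeta> t) \<le> 2 * (B * (2 * norm t) ^ (2*m+1))" using elim(4) by linarith
    then show ?case by (simp add: norm_minus_commute norm_mult norm_power power_mult_distrib mult_ac)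
  qed
  then show ?thesis by (rule bigoI)
qed


definition RPP :: "nat \<Rightarrow> complex poly" where
  "RPP m = (\<Sum>j\<le>m. monom (of_real (cf m j)) (m-j))"

lemma poly_RPP: "poly (RPP m) w = RP m w"
  by (simp add: RPP_def RP_def poly_sum poly_monom)

lemma RP_deriv: "(RP m has_field_derivative poly (pderiv (RPP m)) w) (at w within A)"
proof -
  have "RP m = poly (RPP m)" by (simp add: fun_eq_iff poly_RPP)
  then show ?thesis by (metis poly_DERIV has_field_derivative_at_within)
qed

lemma RP_deriv0:
  assumes "m \<ge> 1"
  shows "poly (pderiv (RPP m)) 0 = of_real (cf m (m-1))"
proof -
  have "poly (pderiv (RPP m)) 0 = coeff (RPP m) 1"
    by (simp add: poly_0_coeff_0 coeff_pderiv)
  also have "\<dots> = (\<Sum>j\<le>m. if j = m - 1 then of_real (cf m j) else 0)"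
    unfolding RPP_def coeff_sum coeff_monom
    by (rule sum.cong) (use assms in auto)
  also have "\<dots> = of_real (cf m (m-1))" using assms by simp
  finally show ?thesis .
qed

lemma cont_RP_neg: "continuous_on A (\<lambda>x. RP m (-x))"
  unfolding RP_def by (intro continuous_intros)

definition Sinf :: "nat \<Rightarrow> complex \<Rightarrow> complex" where
  "Sinf m x = (-1)^m * RP m x / RP m (-x)"

definition SI :: "nat \<Rightarrow> complex set" where "SI m = {x. RP m (-x) \<noteq> 0}"

lemma open_SI: "open (SI m)"
  unfolding SI_def using open_Collect_neq[OF cont_RP_neg continuous_on_const] by blast

lemma zero_SI: "0 \<in> SI m" by (simp add: SI_def RP_0)

lemma Sinf_0: "Sinf m 0 = (-1)^m" by (simp add: Sinf_def RP_0)

lemma RP_neg_deriv: "((\<lambda>x. RP m (-x)) has_field_derivative - poly (pderiv (RPP m)) (-x)) (at x within A)"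
proof -
  have "((\<lambda>x. RP m (-x)) has_field_derivative poly (pderiv (RPP m)) (-x) * (-1)) (at x within A)"
    by (rule DERIV_chain2[OF RP_deriv]) (auto intro!: derivative_eq_intros)
  then show ?thesis by simp
qed

lemma Sinf_deriv:
  assumes "x \<in> SI m"
  shows "(Sinf m has_field_derivative
     (-1)^m * ((poly (pderiv (RPP m)) x * RP m (-x) - RP m x * (- poly (pderiv (RPP m)) (-x))) / (RP m (-x) * RP m (-x)))) (at x within A)"
proof -
  have "((\<lambda>x. RP m x / RP m (-x)) has_field_derivative
     (poly (pderiv (RPP m)) x * RP m (-x) - RP m x * (- poly (pderiv (RPP m)) (-x))) / (RP m (-x) * RP m (-x))) (at x within A)"
    by (rule DERIV_divide[OF RP_deriv RP_neg_deriv]) (use assms in \<open>simp add: SI_def\<close>)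
  from DERIV_cmult[OF this, of "(-1)^m"]
  have "((\<lambda>x. (-1)^m * RP m x / RP m (-x)) has_field_derivative
     (-1)^m * ((poly (pderiv (RPP m)) x * RP m (-x) - RP m x * (- poly (pderiv (RPP m)) (-x))) / (RP m (-x) * RP m (-x)))) (at x within A)"
    by (simp add: mult.assoc)
  moreover have "Sinf m = (\<lambda>x. (-1)^m * RP m x / RP m (-x))" by (simp add: fun_eq_iff Sinf_def)
  ultimately show ?thesis by simp
qed

lemma Sinf_holo: "Sinf m holomorphic_on SI m"
  unfolding holomorphic_on_def using Sinf_deriv by (auto simp: field_differentiable_def)

lemma deriv_Sinf0:
  assumes "m \<ge> 1" "even m"
  shows "deriv (Sinf m) 0 = of_real (2 * cf m (m-1))"
proof -
  have "deriv (Sinf m) 0 = (-1)^m * ((poly (pderiv (RPP m)) 0 * RP m (-0) - RP m 0 * (- poly (pderiv (RPP m)) (-0))) / (RP m (-0) * RP m (-0)))"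
    by (rule DERIV_imp_deriv[OF Sinf_deriv[OF zero_SI]])
  also have "\<dots> = of_real (2 * cf m (m-1))"
    using assms by (simp add: RP_0 RP_deriv0)
  finally show ?thesis .
qed

lemma Pm_neg_RP: "z \<noteq> 0 \<Longrightarrow> Pm m (-z) = (-z)^m * RP m (- (1/z))"
  using Pm_RP[of "-z" m] by simp

lemma Rf_Sinf: "z \<noteq> 0 \<Longrightarrow> Rf m z = Sinf m (1/z)"
proof -
  assume z: "z \<noteq> 0"
  have "Rf m z = (z^m * RP m (1/z)) / ((-z)^m * RP m (- (1/z)))"
    unfolding Rf_def Pm_RP[OF z] Pm_neg_RP[OF z] ..
  also have "(-z)^m = (-1)^m * z^m" by (metis power_minus)
  also have "(z^m * RP m (1/z)) / ((-1)^m * z^m * RP m (- (1/z))) = (-1)^m * RP m (1/z) / RP m (- (1/z))"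
    using z by (cases "even m") (simp_all add: field_simps)
  finally show ?thesis by (simp add: Sinf_def)
qed

lemma SP_SI: "z \<noteq> 0 \<Longrightarrow> Pm m (-z) \<noteq> 0 \<longleftrightarrow> 1/z \<in> SI m"
  using Pm_neg_RP[of z m] by (simp add: SI_def)


lemma exp_ne_1: "t \<noteq> 0 \<Longrightarrow> norm t < 2 * pi \<Longrightarrow> exp t \<noteq> (1::complex)"
proof
  assume t: "t \<noteq> 0" "norm t < 2 * pi" and e: "exp t = 1"
  then obtain n :: int where n: "Re t = 0" "Im t = of_int (2 * n) * pi" by (auto simp: exp_eq_1)
  have "\<bar>Im t\<bar> < 2 * pi" using t(2) abs_Im_le_cmod[of t] by linarith
  then have "\<bar>of_int (2 * n) * pi\<bar> < 2 * pi" using n by simp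
  then have "\<bar>real_of_int n\<bar> < 1" by (simp add: abs_mult)
  then have "n = 0" by linarith
  then have "t = 0" using n by (simp add: complex_eq_iff)
  then show False using t by simp
qed

lemma ev_exp_ne_1: "eventually (\<lambda>t. exp t \<noteq> (1::complex)) (at 0)"
proof -
  have "eventually (\<lambda>t::complex. t \<noteq> 0 \<and> t \<in> ball 0 (2*pi)) (at 0)"
    by (intro ev_at0_ball) simp
  then show ?thesis
  proof (rule eventually_mono)
    fix t :: complex assume "t \<noteq> 0 \<and> t \<in> ball 0 (2*pi)"
    then show "exp t \<noteq> 1" by (intro exp_ne_1) auto
  qed
qed

lemma inf_chart:
  assumes m: "m \<ge> 1" and M: "M > 0"
  obtains Rb \<zeta>i where "Rb \<ge> M"
    "\<And>z t. norm z > Rb \<Longrightarrow> Pm m (-z) \<noteq> 0 \<Longrightarrow> Rf m z = exp t \<Longrightarrow> norm (exp t - 1) < 1 \<Longrightarrow> even m \<and> z = 1 / \<zeta>i t"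
    "even m \<Longrightarrow> eventually (\<lambda>t. \<zeta>i t \<noteq> 0 \<and> norm (1 / \<zeta>i t) > Rb \<and> Pm m (-(1 / \<zeta>i t)) \<noteq> 0 \<and> Rf m (1 / \<zeta>i t) = exp t) (at 0)"
    "even m \<Longrightarrow> \<exists>D::real. D > 0 \<and> (\<lambda>t. 1 / \<zeta>i t - of_real D / t) \<in> O[at 0](\<lambda>_. 1)"
proof (cases "even m")
  case True
  have S1: "Sinf m 0 = 1" using True by (simp add: Sinf_0)
  define D where "D = 2 * cf m (m-1)"
  have Dpos: "D > 0" unfolding D_def using cf_pos[of "m-1" m] by simp
  have d: "deriv (Sinf m) 0 = of_real D" unfolding D_def by (rule deriv_Sinf0[OF m True])
  have dnz: "deriv (Sinf m) 0 \<noteq> 0" using d Dpos by simp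
  obtain \<rho> \<zeta> rr where br: "\<rho> > 0" "\<rho> \<le> 1/M" "ball 0 \<rho> \<subseteq> SI m"
    "eventually (\<lambda>t. \<zeta> t \<in> ball 0 \<rho> \<and> Sinf m (\<zeta> t) = exp t) (nhds 0)"
    "\<And>t z. z \<in> ball 0 \<rho> \<Longrightarrow> Sinf m z = exp t \<Longrightarrow> z = \<zeta> t"
    "\<zeta> 0 = 0" "rr > 0" "\<zeta> holomorphic_on ball 0 rr" "deriv \<zeta> 0 = 1 / deriv (Sinf m) 0"
    using local_branch[OF open_SI zero_SI Sinf_holo S1 dnz, of "1/M"] M by auto
  define Rb where "Rb = 1 / \<rho>"
  have RbM: "Rb \<ge> M" unfolding Rb_def using br(1,2) M by (simp add: field_simps)
  show ?thesis
  proof (rule that[of Rb \<zeta>])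
    show "Rb \<ge> M" by (rule RbM)
  next
    fix z t assume z: "norm z > Rb" "Pm m (-z) \<noteq> 0" "Rf m z = exp t" "norm (exp t - 1) < 1"
    have z0: "z \<noteq> 0" using z(1) RbM M by auto
    have "norm (1/z) < \<rho>" using z(1) br(1) z0 unfolding Rb_def by (simp add: norm_divide field_simps)
    then have "1/z \<in> ball 0 \<rho>" by simp
    moreover have "Sinf m (1/z) = exp t" using z(3) Rf_Sinf[OF z0] by simp
    ultimately have "1/z = \<zeta> t" by (rule br(5))
    then show "even m \<and> z = 1 / \<zeta> t" using True by (metis divide_divide_eq_right div_by_1 mult_1 one_divide_eq_0_iff)
  next
    show "eventually (\<lambda>t. \<zeta> t \<noteq> 0 \<and> norm (1 / \<zeta> t) > Rb \<and> Pm m (-(1 / \<zeta> t)) \<noteq> 0 \<and> Rf m (1 / \<zeta> t) = exp t) (at 0)"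
      using ev_nhds_at[OF br(4)] ev_exp_ne_1
    proof eventually_elim
      case (elim t)
      have zt: "\<zeta> t \<noteq> 0"
      proof
        assume "\<zeta> t = 0"
        then have "exp t = 1" using elim(1) S1 by simp
        then show False using elim(2) by simp
      qed
      have z: "1 / \<zeta> t \<noteq> 0" using zt by simp
      have "norm (\<zeta> t) < \<rho>" using elim(1) by simp
      then have "norm (1 / \<zeta> t) > Rb" unfolding Rb_def using zt br(1) by (simp add: norm_divide field_simps)
      moreover have "Pm m (-(1 / \<zeta> t)) \<noteq> 0"
        using SP_SI[OF z, of m] elim(1) br(3) by auto
      moreover have "Rf m (1 / \<zeta> t) = exp t" using Rf_Sinf[OF z] elim(1) by simp
      ultimately show ?case using zt by simp
    qed
  next
    have "(\<lambda>t. 1 / \<zeta> t - (1 / deriv \<zeta> 0) / t) \<in> O[at 0](\<lambda>_. 1)"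
      by (rule inv_asymp[OF br(8) br(7) br(6)]) (use br(9) dnz in simp)
    moreover have "1 / deriv \<zeta> 0 = of_real D" using br(9) d by simp
    ultimately show "\<exists>D::real. D > 0 \<and> (\<lambda>t. 1 / \<zeta> t - of_real D / t) \<in> O[at 0](\<lambda>_. 1)"
      using Dpos by auto
  qed
next
  case False
  have S1: "Sinf m 0 = -1" using False by (simp add: Sinf_0)
  have "isCont (Sinf m) 0"
    using Sinf_holo[of m] open_SI[of m] zero_SI[of m]
    by (metis continuous_on_eq_continuous_at holomorphic_on_imp_continuous_on)
  then obtain \<eta> where \<eta>: "\<eta> > 0" "\<And>x. x \<noteq> 0 \<and> norm (x - 0) < \<eta> \<Longrightarrow> norm (Sinf m x - Sinf m 0) < 1"
    unfolding isCont_def LIM_eq by (meson zero_less_one)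
  have eta: "norm (Sinf m x + 1) < 1" if "norm x < \<eta>" for x
    using \<eta>(2)[of x] that S1 by (cases "x = 0") auto
  define Rb where "Rb = max M (1/\<eta>)"
  show ?thesis
  proof (rule that[of Rb "\<lambda>_. 0"])
    show "Rb \<ge> M" by (simp add: Rb_def)
  next
    fix z t assume z: "norm z > Rb" "Pm m (-z) \<noteq> 0" "Rf m z = exp t" "norm (exp t - 1) < 1"
    have z0: "z \<noteq> 0" using z(1) M by (auto simp: Rb_def)
    have "norm z > 1/\<eta>" using z(1) by (simp add: Rb_def)
    then have "norm (1/z) < \<eta>" using z0 \<eta>(1) by (simp add: norm_divide field_simps)
    then have "norm (exp t + 1) < 1" using eta[of "1/z"] z(3) Rf_Sinf[OF z0] by simp
    moreover have "norm ((exp t + 1) - (exp t - 1)) \<le> norm (exp t + 1) + norm (exp t - 1)"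
      by (rule norm_triangle_ineq4)
    ultimately have False using z(4) by simp
    then show "even m \<and> z = 1 / (\<lambda>_. 0) t" ..
  qed (use False in auto)
qed


lemma finite_sep:
  fixes Z :: "complex set"
  assumes "finite Z"
  shows "\<exists>\<epsilon>>0. \<epsilon> \<le> 1 \<and> (\<forall>a\<in>Z. \<forall>b\<in>Z. a \<noteq> b \<longrightarrow> 2*\<epsilon> \<le> dist a b)"
proof -
  define D where "D = (\<lambda>(a,b). dist a b) ` {(a,b). a \<in> Z \<and> b \<in> Z \<and> a \<noteq> b}"
  have "{(a,b). a \<in> Z \<and> b \<in> Z \<and> a \<noteq> b} \<subseteq> Z \<times> Z" by auto
  then have fD: "finite D" unfolding D_def using assms by (meson finite_SigmaI finite_imageI finite_subset)
  define \<epsilon> where "\<epsilon> = Min (insert 2 D) / 2"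
  have pos: "\<forall>d\<in>insert 2 D. 0 < d" by (auto simp: D_def)
  have "0 < Min (insert 2 D)" using fD pos by (simp add: Min_gr_iff)
  moreover have "Min (insert 2 D) \<le> 2" using fD by simp
  moreover have "Min (insert 2 D) \<le> dist a b" if "a \<in> Z" "b \<in> Z" "a \<noteq> b" for a b
    using fD that by (intro Min_le) (auto simp: D_def)
  ultimately show ?thesis by (intro exI[of _ \<epsilon>]) (auto simp: \<epsilon>_def)
qed

lemma Rd_imag:
  assumes m: "m \<ge> 1" and p1: "Pm m a = of_real p" and p2: "Pm m (-a) = of_real p" and p: "p \<noteq> 0"
    and a2: "a^2 = - of_real (\<rho>^2)"
  shows "Rd m a = of_real (1 - \<rho>^(2*m) / p^2)"
proof -
  have "Rd m a = 1 + (-1)^(m+1) * a^(2*m) / (Pm m a)^2"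
    by (rule Rd_root(1)[OF m]) (use p1 p2 p in simp_all)
  also have "a^(2*m) = (-1)^m * of_real (\<rho>^(2*m))"
    by (simp add: power_mult a2 power_minus[of "of_real (\<rho>^2)"] flip: of_real_power)
  also have "(-1)^(m+1) * ((-1)^m * complex_of_real (\<rho>^(2*m))) = - of_real (\<rho>^(2*m))"
    by (simp add: power_add mult.assoc flip: power_add)
  finally show ?thesis using p1 by simp
qed

lemma compact_bound:
  assumes K: "compact K" and nz: "\<forall>z\<in>K. Pm m z \<noteq> Pm m (-z)"
  obtains C where "C \<ge> 0" "\<forall>z\<in>K. norm (Pm m (-z)) \<le> C * norm (Pm m z - Pm m (-z))"
proof -
  define f where "f z = Pm m (-z) / (Pm m z - Pm m (-z))" for z
  have cn: "continuous_on K (\<lambda>z. Pm m (-z))"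
    by (rule continuous_on_compose2[OF cont_Pm[of UNIV m]]) (auto intro: continuous_intros)
  have "continuous_on K f" unfolding f_def using nz
    by (intro continuous_intros cn cont_Pm) auto
  then have "bounded (f ` K)" by (intro compact_imp_bounded compact_continuous_image K)
  then obtain B where "\<forall>x\<in>f ` K. norm x \<le> B" by (auto simp: bounded_iff)
  then have B: "\<And>z. z \<in> K \<Longrightarrow> norm (f z) \<le> B" by blast
  show ?thesis
  proof (rule that[of "max B 0"])
    show "max B 0 \<ge> 0" by simp
    show "\<forall>z\<in>K. norm (Pm m (-z)) \<le> max B 0 * norm (Pm m z - Pm m (-z))"
    proof
      fix z assume z: "z \<in> K"
      have d: "Pm m z - Pm m (-z) \<noteq> 0" using nz z by simp
      have "norm (Pm m (-z)) = norm (f z) * norm (Pm m z - Pm m (-z))"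
        using d by (simp add: f_def norm_divide)
      also have "\<dots> \<le> max B 0 * norm (Pm m z - Pm m (-z))"
        using B[OF z] by (intro mult_right_mono) auto
      finally show "norm (Pm m (-z)) \<le> max B 0 * norm (Pm m z - Pm m (-z))" .
    qed
  qed
qed


theorem proposition4:
  fixes m :: nat
  assumes "m \<ge> 1"
  shows "\<exists>(zh :: nat \<Rightarrow> complex \<Rightarrow> complex) (r :: nat \<Rightarrow> real) (\<delta> :: nat \<Rightarrow> real).
     (\<forall>\<^sub>F t in at (0::complex).
        inj_on (\<lambda>j. zh j t) {1..m} \<and> gauss_sols m t = (\<lambda>j. zh j t) ` {1..m})
   \<and> (\<lambda>t. zh 1 t - t) \<in> O[at 0](\<lambda>t. t ^ (2*m+1))
   \<and> (\<forall>l\<in>{1..(m+1) div 2 - 1}.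
        \<delta> l > 1
      \<and> (\<lambda>t. zh (2*l) t - (\<i> * of_real (r l) + of_real (\<delta> l) * t)) \<in> O[at 0](\<lambda>t. t ^ 2)
      \<and> (\<lambda>t. zh (2*l+1) t - (- \<i> * of_real (r l) + of_real (\<delta> l) * t)) \<in> O[at 0](\<lambda>t. t ^ 2))
   \<and> (even m \<longrightarrow> (\<exists>D::real. D > 0 \<and>
        (\<lambda>t. zh m t - of_real D / t) \<in> O[at 0](\<lambda>_. 1)))"
proof -
  have m: "m \<ge> 1" by (rule assms)
  obtain r where R1: "\<forall>k\<in>{1..LL m}. r k > 0" and R2: "inj_on r {1..LL m}"
    and R3: "\<forall>z. Pm m z = Pm m (-z) \<longleftrightarrow> z \<in> rootf r ` {1..2*LL m+1}"
    and R4: "\<forall>z. Pm m z = Pm m (-z) \<longrightarrow> poly (pderiv (QP m)) z \<noteq> 0"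
    and R5: "\<forall>k\<in>{1..LL m}. \<exists>p. Pm m (\<i> * of_real (r k)) = of_real p \<and> p \<noteq> 0 \<and> 0 < 1 - (r k)^(2*m) / p^2"
    using roots_main[OF m] by blast
  define L where "L = LL m"
  define J where "J = {1..2*L+1}"
  define Z where "Z = rootf r ` J"
  have finZ: "finite Z" by (simp add: Z_def J_def)
  have LmJ: "2*L+1 \<le> m" "even m \<Longrightarrow> m = 2*L+2" "odd m \<Longrightarrow> m = 2*L+1"
    unfolding L_def LL_def using m by presburger+
  have rootsZ: "\<And>z. Pm m z = Pm m (-z) \<longleftrightarrow> z \<in> Z" using R3 by (simp add: Z_def J_def L_def)
  have injR: "inj_on (rootf r) J" unfolding J_def L_def by (rule rootf_inj[OF R1 R2])
  obtain p where P: "\<And>k. k \<in> {1..L} \<Longrightarrow> Pm m (\<i> * of_real (r k)) = of_real (p k) \<and> p k \<noteq> 0 \<and> 0 < 1 - (r k)^(2*m) / (p k)^2"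
    using R5 unfolding L_def by metis
  have rootf_even: "rootf r j = \<i> * of_real (r (j div 2))" if "even j" "j \<noteq> 1" for j
    using that by (simp add: rootf_def)
  have rootf_odd: "rootf r j = - (\<i> * of_real (r (j div 2)))" if "odd j" "j \<noteq> 1" for j
    using that by (simp add: rootf_def)
  have Pnz: "Pm m a \<noteq> 0 \<and> Pm m (-a) \<noteq> 0" if a: "a \<in> Z" for a
  proof -
    have eq: "Pm m a = Pm m (-a)" using rootsZ a by simp
    obtain j where j: "j \<in> J" "a = rootf r j" using a unfolding Z_def by blast
    have "Pm m a \<noteq> 0"
    proof (cases "j = 1")
      case True then show ?thesis using j Pm0_nz by (simp add: rootf_def)
    next
      case False
      then have k: "j div 2 \<in> {1..L}" using j by (auto simp: J_def)
      show ?thesis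
      proof (cases "even j")
        case True then show ?thesis using j False P[OF k] rootf_even by simp
      next
        case odd: False
        then have "Pm m (-a) = Pm m (\<i> * of_real (r (j div 2)))" using j False rootf_odd by simp
        then show ?thesis using eq P[OF k] by simp
      qed
    qed
    then show ?thesis using eq by simp
  qed
  have Zgood: "a \<in> SP m \<and> Rf m a = 1 \<and> deriv (Rf m) a = Rd m a \<and> Rd m a \<noteq> 0" if a: "a \<in> Z" for a
  proof -
    have eq: "Pm m a = Pm m (-a)" using rootsZ a by simp
    have nz: "Pm m a \<noteq> 0" "Pm m (-a) \<noteq> 0" using Pnz[OF a] by auto
    have "Rd m a = poly (pderiv (QP m)) a / Pm m a" by (rule Rd_root(2)[OF m eq nz(1)])
    moreover have "poly (pderiv (QP m)) a \<noteq> 0" using R4 eq by blast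
    ultimately have "Rd m a \<noteq> 0" using nz by simp
    then show ?thesis using nz eq by (simp add: SP_def Rf_def deriv_Rf)
  qed
  obtain \<epsilon> where \<epsilon>: "\<epsilon> > 0" "\<epsilon> \<le> 1" "\<forall>a\<in>Z. \<forall>b\<in>Z. a \<noteq> b \<longrightarrow> 2*\<epsilon> \<le> dist a b"
    using finite_sep[OF finZ] by blast
  define Q where "Q a \<rho> \<zeta> rr \<longleftrightarrow> \<rho> > 0 \<and> \<rho> \<le> \<epsilon> \<and> ball a \<rho> \<subseteq> SP m \<and>
      eventually (\<lambda>t. \<zeta> t \<in> ball a \<rho> \<and> Rf m (\<zeta> t) = exp t) (nhds 0) \<and>
      (\<forall>t z. z \<in> ball a \<rho> \<longrightarrow> Rf m z = exp t \<longrightarrow> z = \<zeta> t) \<and>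
      \<zeta> 0 = a \<and> rr > 0 \<and> \<zeta> holomorphic_on ball 0 rr \<and> deriv \<zeta> 0 = 1 / Rd m a"
    for a \<rho> and \<zeta> :: "complex \<Rightarrow> complex" and rr
  have ex: "\<exists>x. Q a (fst x) (fst (snd x)) (snd (snd x))" if a: "a \<in> Z" for a
  proof -
    have g: "a \<in> SP m" "Rf m a = 1" "deriv (Rf m) a = Rd m a" "Rd m a \<noteq> 0" using Zgood[OF a] by auto
    have g4: "deriv (Rf m) a \<noteq> 0" using g by simp
    obtain \<rho> \<zeta> rr where h: "\<rho> > 0" "\<rho> \<le> \<epsilon>" "ball a \<rho> \<subseteq> SP m"
      "eventually (\<lambda>t. \<zeta> t \<in> ball a \<rho> \<and> Rf m (\<zeta> t) = exp t) (nhds 0)"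
      "\<And>t z. z \<in> ball a \<rho> \<Longrightarrow> Rf m z = exp t \<Longrightarrow> z = \<zeta> t"
      "\<zeta> 0 = a" "rr > 0" "\<zeta> holomorphic_on ball 0 rr" "deriv \<zeta> 0 = 1 / deriv (Rf m) a"
      by (rule local_branch[OF open_SP g(1) Rf_holo g(2) g4 \<epsilon>(1)]) blast
    have "Q a \<rho> \<zeta> rr" unfolding Q_def using h g(3) by auto
    then show ?thesis by (intro exI[of _ "(\<rho>, \<zeta>, rr)"]) simp
  qed
  then have "\<forall>a\<in>Z. \<exists>x. Q a (fst x) (fst (snd x)) (snd (snd x))" by blast
  then obtain f where f: "\<forall>a\<in>Z. Q a (fst (f a)) (fst (snd (f a))) (snd (snd (f a)))"
    by (rule bchoice[THEN exE])
  define \<rho> where "\<rho> a = fst (f a)" for a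
  define \<zeta> where "\<zeta> a = fst (snd (f a))" for a
  define rr where "rr a = snd (snd (f a))" for a
  have BR: "\<And>a. a \<in> Z \<Longrightarrow> \<rho> a > 0 \<and> \<rho> a \<le> \<epsilon> \<and> ball a (\<rho> a) \<subseteq> SP m \<and>
      eventually (\<lambda>t. \<zeta> a t \<in> ball a (\<rho> a) \<and> Rf m (\<zeta> a t) = exp t) (nhds 0) \<and>
      (\<forall>t z. z \<in> ball a (\<rho> a) \<longrightarrow> Rf m z = exp t \<longrightarrow> z = \<zeta> a t) \<and>
      \<zeta> a 0 = a \<and> rr a > 0 \<and> \<zeta> a holomorphic_on ball 0 (rr a) \<and> deriv (\<zeta> a) 0 = 1 / Rd m a"
    using f unfolding Q_def \<rho>_def \<zeta>_def rr_def by blast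
  have oneJ: "1 \<in> J" by (simp add: J_def)
  have zeroZ: "0 \<in> Z" using oneJ by (force simp: Z_def rootf_def)
  define M where "M = Max (norm ` Z) + 2"
  have normZ: "norm a \<le> Max (norm ` Z)" if "a \<in> Z" for a using finZ that by simp
  have Mpos: "M > 0" using normZ[OF zeroZ] by (simp add: M_def)
  have ballM: "norm z < M - 1" if a: "a \<in> Z" and z: "z \<in> ball a (\<rho> a)" for a z
  proof -
    have t: "norm z - norm a \<le> norm (z - a)" by (rule norm_triangle_ineq2)
    have "norm (z - a) = dist a z" by (simp add: dist_norm norm_minus_commute)
    then have t2: "norm z \<le> norm a + dist a z" using t by linarith
    have "dist a z < \<rho> a" using z by simp
    moreover have "\<rho> a \<le> \<epsilon>" using BR[OF a] by blast
    ultimately show ?thesis using t2 normZ[OF a] \<epsilon>(2) unfolding M_def by linarith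
  qed
  obtain Rb \<zeta>i where INF: "Rb \<ge> M"
    "\<And>z t. norm z > Rb \<Longrightarrow> Pm m (-z) \<noteq> 0 \<Longrightarrow> Rf m z = exp t \<Longrightarrow> norm (exp t - 1) < 1 \<Longrightarrow> even m \<and> z = 1 / \<zeta>i t"
    "even m \<Longrightarrow> eventually (\<lambda>t. \<zeta>i t \<noteq> 0 \<and> norm (1 / \<zeta>i t) > Rb \<and> Pm m (-(1 / \<zeta>i t)) \<noteq> 0 \<and> Rf m (1 / \<zeta>i t) = exp t) (at 0)"
    "even m \<Longrightarrow> \<exists>D::real. D > 0 \<and> (\<lambda>t. 1 / \<zeta>i t - of_real D / t) \<in> O[at 0](\<lambda>_. 1)"
    using inf_chart[OF m Mpos] by blast
  define K where "K = cball 0 Rb \<inter> (\<Inter>a\<in>Z. - ball a (\<rho> a))"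
  have cK: "compact K"
  proof -
    have "closed K" unfolding K_def using finZ by (intro closed_Int closed_INT) auto
    moreover have "bounded K" unfolding K_def by (rule bounded_Int) simp
    ultimately show ?thesis by (simp add: compact_eq_bounded_closed)
  qed
  have Knz: "\<forall>z\<in>K. Pm m z \<noteq> Pm m (-z)"
  proof
    fix z assume z: "z \<in> K"
    show "Pm m z \<noteq> Pm m (-z)"
    proof
      assume "Pm m z = Pm m (-z)"
      then have "z \<in> Z" using rootsZ by simp
      then have "z \<in> ball z (\<rho> z)" using BR by simp
      then show False using z \<open>z \<in> Z\<close> by (auto simp: K_def)
    qed
  qed
  obtain C where C: "C \<ge> 0" "\<forall>z\<in>K. norm (Pm m (-z)) \<le> C * norm (Pm m z - Pm m (-z))"
    using compact_bound[OF cK Knz] by blast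
  define zh where "zh j t = (if even m \<and> j = m then 1 / \<zeta>i t else \<zeta> (rootf r j) t)" for j t
  have zh_nm: "zh j t = \<zeta> (rootf r j) t" if "\<not> (even m \<and> j = m)" for j t
    using that unfolding zh_def by (rule if_not_P)
  have zh_m: "zh m t = 1 / \<zeta>i t" if "even m" for t
    using that unfolding zh_def by simp
  have jJ: "j \<in> J" if "j \<in> {1..m}" "\<not> (even m \<and> j = m)" for j
    using that LmJ by (cases "even m") (auto simp: J_def)
  have inZ: "rootf r j \<in> Z" if "j \<in> J" for j using that by (simp add: Z_def)
  have JsubM: "J \<subseteq> {1..m}" using LmJ by (auto simp: J_def)
  have Jnm: "\<not> (even m \<and> j = m)" if "j \<in> J" for j using that LmJ by (auto simp: J_def)
  have EV1: "eventually (\<lambda>t. \<forall>a\<in>Z. \<zeta> a t \<in> ball a (\<rho> a) \<and> Rf m (\<zeta> a t) = exp t) (at 0)"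
    using finZ by (rule eventually_ball_finite) (use BR ev_nhds_at in blast)
  have EV2: "eventually (\<lambda>t. even m \<longrightarrow> (\<zeta>i t \<noteq> 0 \<and> norm (1 / \<zeta>i t) > Rb \<and> Pm m (-(1 / \<zeta>i t)) \<noteq> 0 \<and> Rf m (1 / \<zeta>i t) = exp t)) (at 0)"
    by (cases "even m") (use INF(3) in \<open>auto elim: eventually_mono\<close>)
  have EV3: "eventually (\<lambda>t. norm (exp t - 1) < 1 \<and> C * norm (exp t - 1) < 1) (at (0::complex))"
  proof -
    have "((\<lambda>t::complex. exp t) \<longlongrightarrow> exp 0) (at 0)" by (intro tendsto_intros)
    then have "((\<lambda>t::complex. exp t) \<longlongrightarrow> 1) (at 0)" by simp
    then have "eventually (\<lambda>t. dist (exp t) 1 < min 1 (1 / (C + 1))) (at (0::complex))"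
      by (rule tendstoD) (use C(1) in simp)
    then show ?thesis
    proof (rule eventually_mono)
      fix t :: complex assume h: "dist (exp t) 1 < min 1 (1 / (C + 1))"
      then have h1: "norm (exp t - 1) < 1" "norm (exp t - 1) < 1 / (C+1)" by (auto simp: dist_norm)
      have "C * norm (exp t - 1) \<le> (C + 1) * norm (exp t - 1)" by (simp add: mult_right_mono)
      also have "\<dots> < (C+1) * (1 / (C+1))" using h1(2) C(1) by (intro mult_strict_left_mono) auto
      also have "\<dots> = 1" using C(1) by simp
      finally show "norm (exp t - 1) < 1 \<and> C * norm (exp t - 1) < 1" using h1(1) by simp
    qed
  qed
  have part1: "\<forall>\<^sub>F t in at (0::complex). inj_on (\<lambda>j. zh j t) {1..m} \<and> gauss_sols m t = (\<lambda>j. zh j t) ` {1..m}"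
    using EV1 EV2 EV3
  proof eventually_elim
    case (elim t)
    have e1: "\<And>a. a \<in> Z \<Longrightarrow> \<zeta> a t \<in> ball a (\<rho> a) \<and> Rf m (\<zeta> a t) = exp t" using elim(1) by blast
    have sol_iff: "z \<in> gauss_sols m t \<longleftrightarrow> Pm m (-z) \<noteq> 0 \<and> Rf m z = exp t" for z
      by (simp add: gauss_sols_def Rm_def Rf_def)
    have sub1: "gauss_sols m t \<subseteq> (\<lambda>j. zh j t) ` {1..m}"
    proof
      fix z assume "z \<in> gauss_sols m t"
      then have z: "Pm m (-z) \<noteq> 0" "Rf m z = exp t" using sol_iff by auto
      show "z \<in> (\<lambda>j. zh j t) ` {1..m}"
      proof (cases "norm z > Rb")
        case True
        then have "even m \<and> z = 1 / \<zeta>i t" using INF(2)[OF True z] elim(3) by blast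
        then have "z = zh m t" using zh_m by simp
        then show ?thesis using m by auto
      next
        case False
        show ?thesis
        proof (cases "\<exists>a\<in>Z. z \<in> ball a (\<rho> a)")
          case True
          then obtain a where a: "a \<in> Z" "z \<in> ball a (\<rho> a)" by blast
          then have "z = \<zeta> a t" using BR[OF a(1)] z(2) by blast
          obtain j where j: "j \<in> J" "a = rootf r j" using a(1) unfolding Z_def by blast
          have "\<not> (even m \<and> j = m)" by (rule Jnm[OF j(1)])
          then have "zh j t = \<zeta> (rootf r j) t" by (rule zh_nm)
          then have "zh j t = z" using \<open>z = \<zeta> a t\<close> j by simp
          then show ?thesis using JsubM j(1) by force
        next
          case nb: False
          then have "z \<in> K" using False by (auto simp: K_def)
          then have "norm (Pm m (-z)) \<le> C * norm (Pm m z - Pm m (-z))" using C(2) by blast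
          moreover have "Pm m z = exp t * Pm m (-z)" using z by (simp add: Rf_def field_simps)
          then have "Pm m z - Pm m (-z) = (exp t - 1) * Pm m (-z)" by (simp add: algebra_simps)
          ultimately have "norm (Pm m (-z)) \<le> (C * norm (exp t - 1)) * norm (Pm m (-z))"
            by (simp add: norm_mult mult.assoc)
          moreover have "(C * norm (exp t - 1)) * norm (Pm m (-z)) < 1 * norm (Pm m (-z))"
            using elim(3) z(1) by (intro mult_strict_right_mono) auto
          ultimately show ?thesis by simp
        qed
      qed
    qed
    have sub2: "(\<lambda>j. zh j t) ` {1..m} \<subseteq> gauss_sols m t"
    proof
      fix z assume "z \<in> (\<lambda>j. zh j t) ` {1..m}"
      then obtain j where j: "j \<in> {1..m}" "z = zh j t" by blast
      show "z \<in> gauss_sols m t"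
      proof (cases "even m \<and> j = m")
        case True
        then show ?thesis using elim(2) j zh_m by (simp add: sol_iff)
      next
        case False
        then have jj: "j \<in> J" using jJ j(1) by blast
        have a: "rootf r j \<in> Z" by (rule inZ[OF jj])
        have "z = \<zeta> (rootf r j) t" using j zh_nm[OF False] by simp
        moreover have "\<zeta> (rootf r j) t \<in> SP m" using e1[OF a] BR[OF a] by blast
        ultimately show ?thesis using e1[OF a] by (simp add: sol_iff SP_def)
      qed
    qed
    have inj: "inj_on (\<lambda>j. zh j t) {1..m}"
    proof (rule inj_onI, rule ccontr)
      fix i j assume i: "i \<in> {1..m}" and j: "j \<in> {1..m}" and e: "zh i t = zh j t" and ne: "i \<noteq> j"
      have far: "norm (zh k t) < M - 1" if k: "k \<in> {1..m}" "\<not> (even m \<and> k = m)" for k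
      proof -
        have a: "rootf r k \<in> Z" using inZ jJ[OF k] by blast
        have "zh k t = \<zeta> (rootf r k) t" by (rule zh_nm[OF k(2)])
        then show ?thesis using ballM[OF a] e1[OF a] by simp
      qed
      have big: "norm (zh m t) > M" if "even m"
        using elim(2) that INF(1) zh_m by simp
      show False
      proof (cases "even m \<and> i = m")
        case True
        then have "\<not> (even m \<and> j = m)" using ne by simp
        then show False using far[OF j] big e True by force
      next
        case Fi: False
        show False
        proof (cases "even m \<and> j = m")
          case True
          then show False using far[OF i Fi] big e by force
        next
          case Fj: False
          have ai: "rootf r i \<in> Z" and aj: "rootf r j \<in> Z" using inZ jJ i j Fi Fj by blast+
          have neq: "rootf r i \<noteq> rootf r j" using injR jJ[OF i Fi] jJ[OF j Fj] ne by (auto dest: inj_onD)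
          have zi: "zh i t \<in> ball (rootf r i) (\<rho> (rootf r i))" using e1[OF ai] zh_nm[OF Fi] by simp
          have zj: "zh j t \<in> ball (rootf r j) (\<rho> (rootf r j))" using e1[OF aj] zh_nm[OF Fj] by simp
          have "dist (rootf r i) (rootf r j) \<le> dist (rootf r i) (zh i t) + dist (zh j t) (rootf r j)"
            using e dist_triangle[of "rootf r i" "rootf r j" "zh i t"] by (simp add: dist_commute)
          also have "\<dots> < \<rho> (rootf r i) + \<rho> (rootf r j)" using zi zj by (simp add: dist_commute add_strict_mono)
          also have "\<dots> \<le> 2 * \<epsilon>" using BR[OF ai] BR[OF aj] by linarith
          finally show False using \<epsilon>(3) ai aj neq by fastforce
        qed
      qed
    qed
    show ?case using inj sub1 sub2 by blast
  qed
  have zh1: "zh 1 = \<zeta> 0"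
  proof -
    have "\<not> (even m \<and> 1 = m)" using oneJ Jnm by blast
    then show ?thesis using zh_nm by (simp add: fun_eq_iff rootf_def)
  qed
  have Rd0: "Rd m 0 = 1"
    using Rd_root(1)[OF m, of 0] Pm0_nz m by simp
  have part2: "(\<lambda>t. zh 1 t - t) \<in> O[at 0](\<lambda>t. t ^ (2*m+1))"
    unfolding zh1
  proof (rule zh1_est[OF m])
    show "\<zeta> 0 holomorphic_on ball 0 (rr 0)" "rr 0 > 0" "\<zeta> 0 0 = 0" using BR[OF zeroZ] by auto
    show "deriv (\<zeta> 0) 0 = 1" using BR[OF zeroZ] Rd0 by simp
    show "eventually (\<lambda>t. Rf m (\<zeta> 0 t) = exp t) (at 0)"
      using ev_nhds_at BR[OF zeroZ] by (blast intro: eventually_mono)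
  qed
  define \<delta> where "\<delta> l = 1 / (1 - (r l)^(2*m) / (p l)^2)" for l
  have part3: "\<forall>l\<in>{1..(m+1) div 2 - 1}.
        \<delta> l > 1
      \<and> (\<lambda>t. zh (2*l) t - (\<i> * of_real (r l) + of_real (\<delta> l) * t)) \<in> O[at 0](\<lambda>t. t ^ 2)
      \<and> (\<lambda>t. zh (2*l+1) t - (- \<i> * of_real (r l) + of_real (\<delta> l) * t)) \<in> O[at 0](\<lambda>t. t ^ 2)"
  proof
    fix l assume l0: "l \<in> {1..(m+1) div 2 - 1}"
    then have l: "l \<in> {1..L}" by (simp add: L_def LL_def)
    have rl: "r l > 0" using R1 l by (simp add: L_def)
    obtain pl where pl: "Pm m (\<i> * of_real (r l)) = of_real pl" "pl \<noteq> 0" "0 < 1 - (r l)^(2*m) / pl^2"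
      and pdef: "pl = p l" using P[OF l] by blast
    define c where "c = 1 - (r l)^(2*m) / pl^2"
    have c: "0 < c" "c < 1" using pl rl by (auto simp: c_def)
    have dl: "\<delta> l = 1 / c" by (simp add: \<delta>_def c_def pdef)
    have d1: "\<delta> l > 1" using c by (simp add: dl)
    have j2: "2*l \<in> J" "2*l+1 \<in> J" using l by (auto simp: J_def)
    have a2: "rootf r (2*l) = \<i> * of_real (r l)" using rootf_even[of "2*l"] l by simp
    have a3: "rootf r (2*l+1) = - (\<i> * of_real (r l))" using rootf_odd[of "2*l+1"] l by simp
    have Z2: "\<i> * of_real (r l) \<in> Z" using inZ[OF j2(1)] a2 by simp
    have Z3: "- (\<i> * of_real (r l)) \<in> Z" using inZ[OF j2(2)] a3 by simp
    have pm: "Pm m (- (\<i> * of_real (r l))) = of_real pl" using rootsZ Z2 pl(1) by metis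
    have asq: "(\<i> * complex_of_real (r l))^2 = - of_real ((r l)^2)" by (simp add: power_mult_distrib)
    have asq': "(- (\<i> * complex_of_real (r l)))^2 = - of_real ((r l)^2)" by (simp add: power_mult_distrib)
    have Rd2: "Rd m (\<i> * of_real (r l)) = of_real c"
      unfolding c_def by (rule Rd_imag[OF m pl(1) pm pl(2) asq])
    have Rd3: "Rd m (- (\<i> * of_real (r l))) = of_real c"
      unfolding c_def by (rule Rd_imag[OF m pm _ pl(2) asq']) (use pl(1) in simp)
    have est: "(\<lambda>t. zh j t - (a + of_real (\<delta> l) * t)) \<in> O[at 0](\<lambda>t. t ^ 2)"
      if j: "j \<in> J" and aj: "rootf r j = a" and Rda: "Rd m a = of_real c" for j a
    proof -
      have aZ: "a \<in> Z" using inZ[OF j] aj by simp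
      have fz: "zh j = \<zeta> a" using zh_nm[OF Jnm[OF j]] aj by (simp add: fun_eq_iff)
      have br: "\<zeta> a holomorphic_on ball 0 (rr a)" "rr a > 0" "\<zeta> a 0 = a" "deriv (\<zeta> a) 0 = 1 / Rd m a"
        using BR[OF aZ] by auto
      have "(\<lambda>t. \<zeta> a t - \<zeta> a 0 - deriv (\<zeta> a) 0 * t) \<in> O[at 0](\<lambda>t. t^2)" by (rule holo_rem2[OF br(1,2)])
      moreover have "deriv (\<zeta> a) 0 = of_real (\<delta> l)" using br(4) Rda dl by simp
      ultimately show ?thesis using br(3) fz by (simp add: algebra_simps)
    qed
    have e2: "(\<lambda>t. zh (2*l) t - (\<i> * of_real (r l) + of_real (\<delta> l) * t)) \<in> O[at 0](\<lambda>t. t ^ 2)"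
      by (rule est[OF j2(1) a2 Rd2])
    have e3: "(\<lambda>t. zh (2*l+1) t - (- \<i> * of_real (r l) + of_real (\<delta> l) * t)) \<in> O[at 0](\<lambda>t. t ^ 2)"
      using est[OF j2(2) a3 Rd3] by simp
    show "\<delta> l > 1 \<and> (\<lambda>t. zh (2*l) t - (\<i> * of_real (r l) + of_real (\<delta> l) * t)) \<in> O[at 0](\<lambda>t. t ^ 2)
      \<and> (\<lambda>t. zh (2*l+1) t - (- \<i> * of_real (r l) + of_real (\<delta> l) * t)) \<in> O[at 0](\<lambda>t. t ^ 2)"
      using d1 e2 e3 by blast
  qed
  have part4: "even m \<longrightarrow> (\<exists>D::real. D > 0 \<and> (\<lambda>t. zh m t - of_real D / t) \<in> O[at 0](\<lambda>_. 1))"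
  proof
    assume ev: "even m"
    have "zh m = (\<lambda>t. 1 / \<zeta>i t)" using ev zh_m by (simp add: fun_eq_iff)
    then show "\<exists>D::real. D > 0 \<and> (\<lambda>t. zh m t - of_real D / t) \<in> O[at 0](\<lambda>_. 1)" using INF(4)[OF ev] by simp
  qed
  show ?thesis using part1 part2 part3 part4 by blast
qed


end
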